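(* For $n\ge3$ and $k\ge1$ let $W_n^k=C_n+\epsilon_k$. Then: $\dim W_6^1=2$ and $\dim W_n^1=3$ for $n\ne6$; $\dim W_6^2=4$ and $\dim W_n^2=3$ for $n\neq 6$; for every $k\ge3$, $\dim W_6^k=5$ and $\dim W_n^k=4$ for $n\ne6$.
   Context: $C_n$ is the cycle on $n$ vertices and $\epsilon_k$ the graph with $k$ vertices and no edges. The sum $G+H$ is obtained from disjoint copies of $G$ and $H$ by adding all edges between a vertex of $G$ and a vertex of $H$. A unit-distance embedding of a graph $G$ in $\mathbb{R}^n$ is an injective map $f$ from the vertex set of $G$ to $\mathbb{R}^n$ such that $|f(u)-f(v)|=1$ for every edge $uv$ and no point $f(w)$ lies on the segment $[f(u),f(v)]$ for an edge $uv$ with $w\notin\{u,v\}$ (edges may cross one another). The dimension $\dim G$ is the least natural number $n$ such that $G$ has a unit-distance embedding in $\mathbb{R}^n$. *)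

theory Defs
  imports Complex_Main
begin

type_synonym 'a graph = "'a set \<times> ('a \<Rightarrow> 'a \<Rightarrow> bool)"

definition verts :: "'a graph \<Rightarrow> 'a set" where "verts G = fst G"
definition adj :: "'a graph \<Rightarrow> 'a \<Rightarrow> 'a \<Rightarrow> bool" where "adj G = snd G"

definition cycle_graph :: "nat \<Rightarrow> nat graph" where
  "cycle_graph n = ({0..<n}, \<lambda>i j. i \<in> {0..<n} \<and> j \<in> {0..<n} \<and> i \<noteq> j \<and>
       (j = (i + 1) mod n \<or> i = (j + 1) mod n))"

definition empty_graph :: "nat \<Rightarrow> nat graph" where
  "empty_graph k = ({0..<k}, \<lambda>i j. False)"

definition graph_join :: "'a graph \<Rightarrow> 'b graph \<Rightarrow> ('a + 'b) graph" where
  "graph_join G H = (Inl ` verts G \<union> Inr ` verts H,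
     \<lambda>x y. (case (x, y) of
        (Inl a, Inl b) \<Rightarrow> adj G a b
      | (Inr a, Inr b) \<Rightarrow> adj H a b
      | (Inl a, Inr b) \<Rightarrow> a \<in> verts G \<and> b \<in> verts H
      | (Inr a, Inl b) \<Rightarrow> a \<in> verts H \<and> b \<in> verts G))"

definition wheel :: "nat \<Rightarrow> nat \<Rightarrow> (nat + nat) graph" where
  "wheel n k = graph_join (cycle_graph n) (empty_graph k)"

text \<open>Points of R^d are represented as functions nat => real vanishing at coordinates >= d.\<close>
definition in_Rn :: "nat \<Rightarrow> (nat \<Rightarrow> real) \<Rightarrow> bool" where
  "in_Rn d x \<longleftrightarrow> (\<forall>i\<ge>d. x i = 0)"

definition edist :: "nat \<Rightarrow> (nat \<Rightarrow> real) \<Rightarrow> (nat \<Rightarrow> real) \<Rightarrow> real" where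
  "edist d x y = sqrt (\<Sum>i<d. (x i - y i)^2)"

definition on_segment :: "(nat \<Rightarrow> real) \<Rightarrow> (nat \<Rightarrow> real) \<Rightarrow> (nat \<Rightarrow> real) \<Rightarrow> bool" where
  "on_segment p a b \<longleftrightarrow> (\<exists>t::real. 0 \<le> t \<and> t \<le> 1 \<and> p = (\<lambda>i. (1 - t) * a i + t * b i))"

definition unit_dist_embedding :: "'a graph \<Rightarrow> nat \<Rightarrow> ('a \<Rightarrow> nat \<Rightarrow> real) \<Rightarrow> bool" where
  "unit_dist_embedding G d f \<longleftrightarrow>
     (\<forall>v\<in>verts G. in_Rn d (f v)) \<and> inj_on f (verts G) \<and>
     (\<forall>u\<in>verts G. \<forall>v\<in>verts G. adj G u v \<longrightarrow> edist d (f u) (f v) = 1) \<and>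
     (\<forall>u\<in>verts G. \<forall>v\<in>verts G. \<forall>w\<in>verts G. adj G u v \<and> w \<noteq> u \<and> w \<noteq> v
         \<longrightarrow> \<not> on_segment (f w) (f u) (f v))"

definition graph_dim :: "'a graph \<Rightarrow> nat" where
  "graph_dim G = (LEAST d. \<exists>f. unit_dist_embedding G d f)"

end

theory Submission
  imports Defs "HOL-Analysis.Analysis"
begin

type_synonym V = "real \<times> real \<times> real \<times> real"

lemma five_orth:
  fixes a b c d e :: V
  assumes nz: "a \<noteq> 0" "b \<noteq> 0" "c \<noteq> 0" "d \<noteq> 0" "e \<noteq> 0"
  and o: "inner a b = 0" "inner a c = 0" "inner a d = 0" "inner a e = 0"
     "inner b c = 0" "inner b d = 0" "inner b e = 0" "inner c d = 0" "inner c e = 0" "inner d e = 0"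
  shows False
proof -
  have ne: "\<And>x y::V. x \<noteq> 0 \<Longrightarrow> inner x y = 0 \<Longrightarrow> x \<noteq> y" by (metis inner_eq_zero_iff)
  have o': "inner b a = 0" "inner c a = 0" "inner d a = 0" "inner e a = 0"
     "inner c b = 0" "inner d b = 0" "inner e b = 0" "inner d c = 0" "inner e c = 0" "inner e d = 0"
    using o by (simp_all add: inner_commute)
  let ?S = "{a,b,c,d,e}"
  have po: "pairwise orthogonal ?S"
    using o o' by (auto simp: pairwise_def orthogonal_def)
  have "0 \<notin> ?S" using nz by auto
  with po have "independent ?S" by (rule pairwise_orthogonal_independent)
  hence "card ?S \<le> 4" using independent_bound by fastforce
  moreover have "card ?S = 5"
    using ne[OF nz(1) o(1)] ne[OF nz(1) o(2)] ne[OF nz(1) o(3)] ne[OF nz(1) o(4)]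
      ne[OF nz(2) o(5)] ne[OF nz(2) o(6)] ne[OF nz(2) o(7)] ne[OF nz(3) o(8)] ne[OF nz(3) o(9)]
      ne[OF nz(4) o(10)] by simp
  ultimately show False by simp
qed

lemma refl_lemma:
  fixes E1 E2 x y z :: V
  assumes nz: "E1 \<noteq> 0" "E2 \<noteq> 0" "x \<noteq> 0" and o12: "inner E1 E2 = 0"
  and ox: "inner x E1 = 0" "inner x E2 = 0"
  and oy: "inner y E1 = 0" "inner y E2 = 0"
  and oz: "inner z E1 = 0" "inner z E2 = 0"
  and nrm: "inner y y = inner z z" and ip: "inner y x = inner z x"
  shows "z = y \<or> z = (2 * inner y x / inner x x) *\<^sub>R x - y"
proof (rule ccontr)
  assume H: "\<not> ?thesis"
  define m where "m = 2 * inner y x / inner x x"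
  define w where "w = z - y"
  define v where "v = z + y - m *\<^sub>R x"
  have xx: "inner x x \<noteq> 0" using nz(3) by simp
  have w0: "w \<noteq> 0" using H by (auto simp: w_def)
  have v0: "v \<noteq> 0" using H by (auto simp: v_def m_def algebra_simps)
  have a1: "inner E1 w = 0" "inner E2 w = 0" "inner E1 v = 0" "inner E2 v = 0"
    using ox oy oz by (simp_all add: w_def v_def inner_diff_right inner_add_right inner_commute)
  have a2: "inner x w = 0" using ip by (simp add: w_def inner_diff_right inner_commute)
  have a3: "inner x v = 0"
  proof -
    have "inner x v = inner x z + inner x y - m * inner x x"
      by (simp add: v_def inner_diff_right inner_add_right)
    also have "\<dots> = 0" using ip xx by (simp add: m_def inner_commute)
    finally show ?thesis .
  qed
  have a4: "inner w v = 0"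
  proof -
    have "inner w v = inner z z - inner y y - m * (inner z x - inner y x)"
      by (simp add: w_def v_def inner_diff_right inner_add_right inner_diff_left inner_add_left inner_commute algebra_simps)
    thus ?thesis using nrm ip by simp
  qed
  show False
    using five_orth[OF nz(1) nz(2) nz(3) w0 v0 o12 _ a1(1) a1(3) _ a1(2) a1(4) a2 a3 a4] ox
    by (simp add: inner_commute)
qed

lemma collinear_lemma:
  fixes p a b c :: V
  assumes "dist p a = 1" "dist p b = 1" "dist p c = 1" "c \<noteq> a" "c \<noteq> b" "b \<noteq> a"
  shows "(c - a) - (inner (c - a) (b - a) / inner (b - a) (b - a)) *\<^sub>R (b - a) \<noteq> 0"
proof
  define u where "u = b - a"
  define t where "t = inner (c - a) (b - a) / inner (b - a) (b - a)"
  define g where "g = a - p"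
  assume "(c - a) - (inner (c - a) (b - a) / inner (b - a) (b - a)) *\<^sub>R (b - a) = 0"
  hence c: "c = a + t *\<^sub>R u" by (simp add: t_def u_def algebra_simps)
  have uu: "inner u u \<noteq> 0" using assms(6) by (simp add: u_def)
  have dd: "\<And>q. dist p q = 1 \<Longrightarrow> inner (q - p) (q - p) = 1"
    by (metis dist_commute dist_norm norm_eq_1 power2_norm_eq_inner power_one)
  have ga: "inner g g = 1" using dd[OF assms(1)] by (simp add: g_def)
  have gb: "inner (g + u) (g + u) = 1" using dd[OF assms(2)] by (simp add: g_def u_def)
  have gc: "inner (g + t *\<^sub>R u) (g + t *\<^sub>R u) = 1" using dd[OF assms(3)] c by (simp add: g_def algebra_simps)
  have e1: "2 * inner g u + inner u u = 0" using ga gb by (simp add: inner_add_left inner_add_right inner_commute)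
  have e2: "2 * t * inner g u + t * t * inner u u = 0" using ga gc
    by (simp add: inner_add_left inner_add_right inner_commute algebra_simps)
  have gu: "inner g u = - inner u u / 2" using e1 by simp
  have "t * t * inner u u = t * inner u u" using e2 unfolding gu by (simp add: algebra_simps)
  hence "t * t = t" using uu by simp
  hence "t = 0 \<or> t = 1" by (metis mult_cancel_right1 mult_zero_left)
  thus False using c assms(4,5) by (auto simp: u_def)
qed

lemma verts_wheel: "verts (wheel n k) = Inl ` {0..<n} \<union> Inr ` {0..<k}"
  by (simp add: wheel_def graph_join_def verts_def cycle_graph_def empty_graph_def)

lemma adj_wheel_ll: "adj (wheel n k) (Inl a) (Inl b) \<longleftrightarrow> a<n \<and> b<n \<and> a\<noteq>b \<and> (b = (a+1) mod n \<or> a = (b+1) mod n)"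
  by (simp add: wheel_def graph_join_def adj_def cycle_graph_def empty_graph_def)
lemma adj_wheel_rr: "\<not> adj (wheel n k) (Inr a) (Inr b)"
  by (simp add: wheel_def graph_join_def adj_def cycle_graph_def empty_graph_def)
lemma adj_wheel_lr: "adj (wheel n k) (Inl a) (Inr b) \<longleftrightarrow> a<n \<and> b<k"
  by (simp add: wheel_def graph_join_def adj_def verts_def cycle_graph_def empty_graph_def)
lemma adj_wheel_rl: "adj (wheel n k) (Inr a) (Inl b) \<longleftrightarrow> a<k \<and> b<n"
  by (simp add: wheel_def graph_join_def adj_def verts_def cycle_graph_def empty_graph_def)

lemma edist_mono: assumes "in_Rn d x" "in_Rn d y" "d \<le> D" shows "edist D x y = edist d x y"
proof -
  have "(\<Sum>i<D. (x i - y i)^2) = (\<Sum>i<d. (x i - y i)^2)"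
    by (rule sum.mono_neutral_right) (use assms in \<open>auto simp: in_Rn_def\<close>)
  thus ?thesis by (simp add: edist_def)
qed

lemma in_Rn_mono: "in_Rn d x \<Longrightarrow> d \<le> D \<Longrightarrow> in_Rn D x"
  by (auto simp: in_Rn_def)

lemma ude_mono: assumes "unit_dist_embedding G d f" "d \<le> D" shows "unit_dist_embedding G D f"
  using assms edist_mono[OF _ _ assms(2)] in_Rn_mono[OF _ assms(2)]
  unfolding unit_dist_embedding_def by metis

lemma graph_dim_eqI:
  assumes "unit_dist_embedding G D f" "\<And>f. \<not> unit_dist_embedding G (D - 1) f" "D \<ge> 1"
  shows "graph_dim G = D"
  unfolding graph_dim_def
proof (rule Least_equality)
  show "\<exists>f. unit_dist_embedding G D f" using assms(1) by blast
next
  fix d assume "\<exists>f. unit_dist_embedding G d f"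
  then obtain g where g: "unit_dist_embedding G d g" by blast
  show "D \<le> d"
  proof (rule ccontr)
    assume "\<not> D \<le> d"
    hence "d \<le> D - 1" by simp
    from ude_mono[OF g this] assms(2) show False by blast
  qed
qed

definition toV :: "(nat \<Rightarrow> real) \<Rightarrow> V" where "toV x = (x 0, x 1, x 2, x 3)"

lemma inner_V: "inner (a::V) b = fst a * fst b + fst (snd a) * fst (snd b) + fst (snd (snd a)) * fst (snd (snd b)) + snd (snd (snd a)) * snd (snd (snd b))"
  by (cases a; cases b) (auto simp: inner_Pair)

lemma edist4: "edist 4 x y = dist (toV x) (toV y)"
proof -
  have "(dist (toV x) (toV y))^2 = inner (toV x - toV y) (toV x - toV y)"
    by (simp add: dist_norm power2_norm_eq_inner)
  also have "\<dots> = (\<Sum>i<4. (x i - y i)^2)"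
    by (simp add: inner_V toV_def eval_nat_numeral power2_eq_square)
  finally show ?thesis unfolding edist_def by (metis real_sqrt_unique zero_le_dist)
qed

lemma edist_toV: assumes "in_Rn d x" "in_Rn d y" "d \<le> 4" shows "edist d x y = dist (toV x) (toV y)"
  using edist_mono[OF assms] edist4 by simp

lemma toV_inj: assumes "in_Rn 4 x" "in_Rn 4 y" "toV x = toV y" shows "x = y"
proof
  fix i show "x i = y i"
  proof (cases "i < 4")
    case True
    hence "i = 0 \<or> i = 1 \<or> i = 2 \<or> i = 3" by auto
    thus ?thesis using assms(3) by (auto simp: toV_def)
  next
    case False thus ?thesis using assms(1,2) by (simp add: in_Rn_def)
  qed
qed

definition e2 :: V where "e2 = (0,0,1,0)"
definition e3 :: V where "e3 = (0,0,0,1)"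

lemma e2_nz: "e2 \<noteq> 0" and e3_nz: "e3 \<noteq> 0" and e23: "inner e2 e3 = 0"
  by (simp_all add: e2_def e3_def inner_V zero_prod_def)

lemma toV_e3: "in_Rn 3 x \<Longrightarrow> inner (toV x) e3 = 0"
  by (simp add: in_Rn_def toV_def e3_def inner_V)
lemma toV_e2: "in_Rn 2 x \<Longrightarrow> inner (toV x) e2 = 0"
  by (simp add: in_Rn_def toV_def e2_def inner_V)

lemma wheel_data:
  assumes f: "unit_dist_embedding (wheel n k) d f" and d: "d \<le> 4" and n: "n \<ge> 3"
  defines "P \<equiv> \<lambda>i. toV (f (Inl i))" and "H \<equiv> \<lambda>j. toV (f (Inr j))"
  shows "\<And>i. i < n \<Longrightarrow> dist (P i) (P ((i+1) mod n)) = 1"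
    and "\<And>i j. i < n \<Longrightarrow> j < k \<Longrightarrow> dist (P i) (H j) = 1"
    and "\<And>i i'. i < n \<Longrightarrow> i' < n \<Longrightarrow> P i = P i' \<Longrightarrow> i = i'"
    and "\<And>j j'. j < k \<Longrightarrow> j' < k \<Longrightarrow> H j = H j' \<Longrightarrow> j = j'"
    and "\<And>i. i < n \<Longrightarrow> in_Rn d (f (Inl i))"
    and "\<And>j. j < k \<Longrightarrow> in_Rn d (f (Inr j))"
proof -
  have V: "verts (wheel n k) = Inl ` {0..<n} \<union> Inr ` {0..<k}" by (rule verts_wheel)
  have inR: "\<And>v. v \<in> verts (wheel n k) \<Longrightarrow> in_Rn d (f v)" using f by (simp add: unit_dist_embedding_def)
  have inj: "inj_on f (verts (wheel n k))" using f by (simp add: unit_dist_embedding_def)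
  have ed: "\<And>u v. u \<in> verts (wheel n k) \<Longrightarrow> v \<in> verts (wheel n k) \<Longrightarrow> adj (wheel n k) u v \<Longrightarrow> edist d (f u) (f v) = 1"
    using f by (simp add: unit_dist_embedding_def)
  show "\<And>i. i < n \<Longrightarrow> in_Rn d (f (Inl i))" "\<And>j. j < k \<Longrightarrow> in_Rn d (f (Inr j))"
    using inR V by auto
  show "dist (P i) (P ((i+1) mod n)) = 1" if "i < n" for i
  proof -
    have a: "adj (wheel n k) (Inl i) (Inl ((i+1) mod n))"
      unfolding adj_wheel_ll using that n
      by (auto simp: mod_Suc)
    have "edist d (f (Inl i)) (f (Inl ((i+1) mod n))) = 1"
      by (rule ed[OF _ _ a]) (use V that n in auto)
    thus ?thesis unfolding P_def using edist_toV[OF inR inR d] V that n by auto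
  qed
  show "dist (P i) (H j) = 1" if "i < n" "j < k" for i j
  proof -
    have "edist d (f (Inl i)) (f (Inr j)) = 1"
      by (rule ed) (use V that in \<open>auto simp: adj_wheel_lr\<close>)
    thus ?thesis unfolding P_def H_def using edist_toV[OF inR inR d] V that by auto
  qed
  show "i = i'" if "i < n" "i' < n" "P i = P i'" for i i'
  proof -
    have "f (Inl i) = f (Inl i')"
      by (rule toV_inj) (use that inR V in_Rn_mono[OF _ d] in \<open>auto simp: P_def\<close>)
    thus ?thesis using inj V that by (auto dest: inj_onD)
  qed
  show "j = j'" if "j < k" "j' < k" "H j = H j'" for j j'
  proof -
    have "f (Inr j) = f (Inr j')"
      by (rule toV_inj) (use that inR V in_Rn_mono[OF _ d] in \<open>auto simp: H_def\<close>)
    thus ?thesis using inj V that by (auto dest: inj_onD)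
  qed
qed

lemma dist1: "dist (a::V) b = 1 \<Longrightarrow> inner (a - b) (a - b) = 1"
  by (metis dist_norm norm_eq_1)

lemma dist1_iff: "dist (a::V) b = 1 \<longleftrightarrow> inner (a - b) (a - b) = 1"
  by (metis dist_norm norm_eq_1)

lemma ipd: assumes "inner (a::V) a = R" "inner b b = R" "dist a b = 1" shows "inner a b = R - 1/2"
proof -
  have "inner (a - b) (a - b) = 1" using dist1[OF assms(3)] .
  hence "inner a a - 2 * inner a b + inner b b = 1"
    by (simp add: inner_diff_left inner_diff_right inner_commute)
  thus ?thesis using assms by simp
qed

lemma cross_lemma:
  fixes p q h h' :: V
  assumes "dist p h = 1" "dist p h' = 1" "dist q h = 1" "dist q h' = 1"
  shows "inner (q - p) (h' - h) = 0"
proof -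
  have "\<And>a b::V. dist a b = 1 \<Longrightarrow> 2 * inner a b = inner a a + inner b b - 1"
    by (drule dist1) (simp add: inner_diff_left inner_diff_right inner_commute)
  from this[OF assms(1)] this[OF assms(2)] this[OF assms(3)] this[OF assms(4)]
  show ?thesis by (simp add: inner_diff_left inner_diff_right inner_commute algebra_simps)
qed

fun cf :: "real \<Rightarrow> nat \<Rightarrow> real \<times> real" where
  "cf l 0 = (0, 1)" | "cf l (Suc 0) = (1, 0)"
| "cf l (Suc (Suc j)) = (2*l * fst (cf l (Suc j)) - fst (cf l j), 2*l * snd (cf l (Suc j)) - snd (cf l j))"

lemma cf_rep:
  fixes x :: "nat \<Rightarrow> V"
  assumes r: "\<And>j. x (Suc (Suc j)) = (2*l) *\<^sub>R x (Suc j) - x j"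
  shows "x j = fst (cf l j) *\<^sub>R x 1 + snd (cf l j) *\<^sub>R x 0"
proof -
  have "x j = fst (cf l j) *\<^sub>R x 1 + snd (cf l j) *\<^sub>R x 0 \<and>
        x (Suc j) = fst (cf l (Suc j)) *\<^sub>R x 1 + snd (cf l (Suc j)) *\<^sub>R x 0"
  proof (induction j)
    case 0 show ?case by simp
  next
    case (Suc j)
    hence a: "x j = fst (cf l j) *\<^sub>R x 1 + snd (cf l j) *\<^sub>R x 0"
      and b: "x (Suc j) = fst (cf l (Suc j)) *\<^sub>R x 1 + snd (cf l (Suc j)) *\<^sub>R x 0" by auto
    have "x (Suc (Suc j)) = fst (cf l (Suc (Suc j))) *\<^sub>R x 1 + snd (cf l (Suc (Suc j))) *\<^sub>R x 0"
      unfolding r cf.simps fst_conv snd_conv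
      by (subst a, subst b) (simp add: algebra_simps)
    with b show ?case by simp
  qed
  thus ?thesis by simp
qed


lemma circle_rec:
  fixes x :: "nat \<Rightarrow> V"
  assumes E: "E1 \<noteq> 0" "E2 \<noteq> 0" "inner E1 E2 = 0"
  and o1: "\<And>j. inner (x j) E1 = 0" and o2: "\<And>j. inner (x j) E2 = 0"
  and nr: "\<And>j. inner (x j) (x j) = R"
  and d: "\<And>j. dist (x j) (x (j+1)) = 1"
  and ne: "\<And>j. x (j+2) \<noteq> x j"
  shows "R > 0" "\<And>j. x (j+2) = (2 * (R - 1/2) / R) *\<^sub>R x (j+1) - x j"
proof -
  show R: "R > 0"
  proof (rule ccontr)
    assume "\<not> R > 0"
    moreover have "R \<ge> 0" using nr[of 0] by (metis inner_ge_zero)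
    ultimately have "R = 0" by simp
    hence "x 0 = 0" "x 1 = 0" using nr[of 0] nr[of 1] by auto
    thus False using d[of 0] by simp
  qed
  fix j
  have x0: "x (j+1) \<noteq> 0" using nr[of "j+1"] R by auto
  have i1: "inner (x j) (x (j+1)) = R - 1/2" by (rule ipd[OF nr nr d])
  have i2: "inner (x (j+2)) (x (j+1)) = R - 1/2"
    using ipd[OF nr nr d[of "j+1"]] by (simp add: inner_commute add.assoc)
  have "x (j+2) = x j \<or> x (j+2) = (2 * inner (x j) (x (j+1)) / inner (x (j+1)) (x (j+1))) *\<^sub>R x (j+1) - x j"
    by (rule refl_lemma[OF E(1,2) x0 E(3) o1 o2 o1 o2 o1 o2]) (use nr i1 i2 in simp_all)
  thus "x (j+2) = (2 * (R - 1/2) / R) *\<^sub>R x (j+1) - x j" using ne[of j] i1 nr by simp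
qed

lemma cyclen_false:
  fixes x :: "nat \<Rightarrow> V"
  assumes E: "E1 \<noteq> 0" "E2 \<noteq> 0" "inner E1 E2 = 0"
  and o1: "\<And>j. inner (x j) E1 = 0" and o2: "\<And>j. inner (x j) E2 = 0"
  and nr: "\<And>j. inner (x j) (x j) = 1"
  and d: "\<And>j. dist (x j) (x (j+1)) = 1"
  and ne: "\<And>j. x (j+2) \<noteq> x j"
  and per: "\<And>j. x (j + n) = x j"
  and inj: "\<And>i i'. i < n \<Longrightarrow> i' < n \<Longrightarrow> x i = x i' \<Longrightarrow> i = i'"
  and n: "n \<ge> 3" "n \<noteq> 6"
  shows False
proof -
  have r: "\<And>j. x (j+2) = x (j+1) - x j"
    using circle_rec(2)[OF E o1 o2 nr d ne] by simp
  have r3: "\<And>j. x (j+3) = - x j"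
  proof -
    fix j
    have "x (j+3) = x (j+2) - x (j+1)" using r[of "j+1"] by (simp add: add.assoc eval_nat_numeral)
    also have "\<dots> = - x j" using r[of j] by simp
    finally show "x (j+3) = - x j" .
  qed
  have r6: "x 6 = x 0" using r3[of 0] r3[of 3] by simp
  have nz: "\<And>j. x j \<noteq> 0" using nr by (metis inner_zero_left zero_neq_one)
  consider "n = 3" | "n = 4" | "n = 5" | "n > 6" using n by linarith
  thus False
  proof cases
    case 1
    have "x 3 = x 0" using per[of 0] 1 by simp
    thus False using r3[of 0] nz[of 0] by (simp add: eq_neg_iff_add_eq_0) (metis scaleR_2 scaleR_eq_0_iff zero_neq_numeral)
  next
    case 2
    have "x 4 = x 0" using per[of 0] 2 by simp
    moreover have "x 4 = - x 1" using r3[of 1] by simp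
    ultimately have a: "x 1 = - x 0" by (metis minus_minus)
    have "x 2 = 2 *\<^sub>R x 1" using r[of 0] a by (simp add: scaleR_2 eval_nat_numeral)
    hence "inner (x 2) (x 2) = 4 * inner (x 1) (x 1)" by simp
    thus False using nr[of 2] nr[of 1] by simp
  next
    case 3
    have "x 5 = x 0" using per[of 0] 3 by simp
    moreover have "x 5 = - x 2" using r3[of 2] by simp
    ultimately have "x 1 = 0" using r[of 0] by (simp add: eval_nat_numeral)
    thus False using nz by blast
  next
    case 4
    thus False using inj[of 6 0] r6 by simp
  qed
qed

lemma cycle6_false:
  fixes x :: "nat \<Rightarrow> V"
  assumes E: "E1 \<noteq> 0" "E2 \<noteq> 0" "inner E1 E2 = 0"
  and o1: "\<And>j. inner (x j) E1 = 0" and o2: "\<And>j. inner (x j) E2 = 0"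
  and nr: "\<And>j. inner (x j) (x j) = R" and R1: "R < 1"
  and d: "\<And>j. dist (x j) (x (j+1)) = 1"
  and ne: "\<And>j. x (j+2) \<noteq> x j"
  and per: "x 6 = x 0" and ne3: "x 3 \<noteq> x 0"
  shows False
proof -
  note rec = circle_rec[OF E o1 o2 nr d ne]
  define l where "l = (R - 1/2) / R"
  have R0: "R > 0" by (rule rec(1))
  have r: "\<And>j. x (j+2) = (2*l) *\<^sub>R x (j+1) - x j" using rec(2) by (simp add: l_def)
  have l1: "l < 1/2" using R0 R1 by (simp add: l_def field_simps)
  have i01: "inner (x 0) (x 1) = l * R" using ipd[OF nr nr d[of 0]] R0 by (simp add: l_def)
  have rS: "\<And>j. x (Suc (Suc j)) = (2*l) *\<^sub>R x (Suc j) - x j" using r by (simp add: eval_nat_numeral)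
  note rep = cf_rep[of x l, OF rS]
  have x2: "x 2 = (2*l) *\<^sub>R x 1 - x 0" using rep[of 2] by (simp add: eval_nat_numeral)
  have x3: "x 3 = (4*l^2 - 1) *\<^sub>R x 1 + (-2*l) *\<^sub>R x 0"
    using rep[of 3] by (simp add: eval_nat_numeral algebra_simps power2_eq_square)
  define A where "A = 32*l^5 - 32*l^3 + 6*l"
  define B where "B = -16*l^4 + 12*l^2 - 2"
  have x6: "x 6 = A *\<^sub>R x 1 + (B + 1) *\<^sub>R x 0"
    using rep[of 6] unfolding A_def B_def
    by (simp add: eval_nat_numeral algebra_simps power2_eq_square)
  have Z: "A *\<^sub>R x 1 + B *\<^sub>R x 0 = 0" using x6 per by (simp add: algebra_simps)
  have "inner (A *\<^sub>R x 1 + B *\<^sub>R x 0) (x 0) = 0" "inner (A *\<^sub>R x 1 + B *\<^sub>R x 0) (x 1) = 0"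
    using Z by simp_all
  hence "R * (A * l + B) = 0" and "R * (A + B * l) = 0"
    using i01 nr[of 0] nr[of 1] by (simp_all add: inner_add_left inner_commute algebra_simps)
  hence q1: "A * l + B = 0" and q2: "A + B * l = 0" using R0 by simp_all
  have "l^2 \<noteq> 1"
  proof
    assume "l^2 = 1"
    have "inner (x 2 - x 0) (x 2 - x 0) = 4*l^2*R - 8*l*(l*R) + 4*R"
      unfolding x2 using i01 nr[of 0] nr[of 1]
      by (simp add: inner_diff_left inner_diff_right inner_commute algebra_simps power2_eq_square)
    also have "\<dots> = 0" using \<open>l^2 = 1\<close> by (simp add: algebra_simps power2_eq_square)
    finally show False using ne[of 0] by (simp add: eval_nat_numeral)
  qed
  have Bl: "B = - A * l" using q1 by simp
  have "A * (1 - l^2) = 0" using q2 unfolding Bl by (simp add: power2_eq_square algebra_simps)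
  hence A0: "A = 0" using \<open>l^2 \<noteq> 1\<close> by simp
  hence B0: "B = 0" using q1 by simp
  have fA: "A = 2*l*(4*l^2-1)*(4*l^2-3)" unfolding A_def by (simp add: algebra_simps power2_eq_square power3_eq_cube eval_nat_numeral)
  have fB: "B = -2*(4*l^2-1)*(2*l^2-1)" unfolding B_def by (simp add: algebra_simps power2_eq_square eval_nat_numeral)
  have "4*l^2 - 1 = 0"
  proof (rule ccontr)
    assume h: "4*l^2 - 1 \<noteq> 0"
    hence "2*l^2 - 1 = 0" using B0 fB by simp
    moreover have "l = 0 \<or> 4*l^2-3 = 0" using A0 fA h by simp
    ultimately show False by auto
  qed
  hence "(2*l - 1) * (2*l + 1) = 0" by (simp add: algebra_simps power2_eq_square)
  hence "l = -1/2" using l1 by auto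
  hence "x 3 = x 0" using x3 by (simp add: power2_eq_square)
  thus False using ne3 by simp
qed

lemma g_e: assumes "dist (p::V) h0 = 1" "dist p h1 = 1"
  shows "inner (p - h0) (h1 - h0) = inner (h1 - h0) (h1 - h0) / 2"
proof -
  have e1: "inner p p - 2 * inner p h0 + inner h0 h0 = 1" using dist1[OF assms(1)]
    by (simp add: inner_diff_left inner_diff_right inner_commute)
  have e2: "inner p p - 2 * inner p h1 + inner h1 h1 = 1" using dist1[OF assms(2)]
    by (simp add: inner_diff_left inner_diff_right inner_commute)
  have "inner (p - h0) (h1 - h0) = inner p h1 - inner p h0 - inner h0 h1 + inner h0 h0"
    by (simp add: inner_diff_left inner_diff_right inner_commute)
  moreover have "inner (h1 - h0) (h1 - h0) = inner h1 h1 - 2 * inner h0 h1 + inner h0 h0"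
    by (simp add: inner_diff_left inner_diff_right inner_commute)
  ultimately show ?thesis using e1 e2 by simp
qed

lemma center3:
  fixes e f g :: V
  assumes ef: "inner e f = 0" and f0: "f \<noteq> 0"
  and gg: "inner g g = 1" and ge: "inner g e = inner e e / 2" and gf: "inner g f = a2"
  defines "c0 \<equiv> (1/2) *\<^sub>R e + (a2 / inner f f) *\<^sub>R f"
  shows "inner (g - c0) e = 0" "inner (g - c0) f = 0"
    "inner (g - c0) (g - c0) = 1 - inner e e / 4 - a2^2 / inner f f"
proof -
  have ff: "inner f f \<noteq> 0" using f0 by simp
  have fe: "inner f e = 0" using ef by (simp add: inner_commute)
  show "inner (g - c0) e = 0" unfolding c0_def
    using ge fe by (simp add: inner_diff_left inner_add_left)
  show "inner (g - c0) f = 0" unfolding c0_def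
    using gf ef ff by (simp add: inner_diff_left inner_add_left)
  have c0c0: "inner c0 c0 = inner e e / 4 + a2^2 / inner f f" unfolding c0_def
    using ef fe ff by (simp add: inner_add_left inner_add_right power2_eq_square)
  have gc0: "inner g c0 = inner e e / 4 + a2^2 / inner f f" unfolding c0_def
    using ge gf ff by (simp add: inner_add_right power2_eq_square)
  show "inner (g - c0) (g - c0) = 1 - inner e e / 4 - a2^2 / inner f f"
    using c0c0 gc0 gg by (simp add: inner_diff_left inner_diff_right inner_commute)
qed

lemma mod_add2_ne: assumes "(n::nat) \<ge> 3" shows "(j + 2) mod n \<noteq> j mod n"
proof
  assume h: "(j + 2) mod n = j mod n"
  define i where "i = j mod n"
  have i: "i < n" using assms by (simp add: i_def)
  have "(i + 2) mod n = i" using h mod_add_left_eq[of j n 2] by (simp add: i_def)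
  moreover have "(i + 2) mod n = (if i + 2 < n then i + 2 else i + 2 - n)"
    using i assms by (auto simp: mod_if)
  ultimately show False using assms by (auto split: if_splits)
qed

lemma mod_suc_eq: "((j mod n) + 1) mod n = (j + 1) mod (n::nat)"
  by (simp add: mod_Suc_eq)

lemma dist_sub: "dist ((a::V) - c) (b - c) = dist a b" by (simp add: dist_norm)

lemma in_R1_dist: assumes "in_Rn 1 x" "in_Rn 1 y" shows "dist (toV x) (toV y) = \<bar>x 0 - y 0\<bar>"
  using edist_toV[OF assms] by (simp add: edist_def)

lemma no_R1: assumes n: "n \<ge> 3" and k: "k \<ge> 1" shows "\<not> unit_dist_embedding (wheel n k) 1 f"
proof
  assume f: "unit_dist_embedding (wheel n k) 1 f"
  note W = wheel_data[OF f _ n]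
  have n1: "1 mod n = 1" using n by simp
  have a: "dist (toV (f (Inl 0))) (toV (f (Inl 1))) = 1" using W(1)[of 0] n n1 by simp
  have b: "dist (toV (f (Inl 0))) (toV (f (Inr 0))) = 1" using W(2)[of 0 0] n k by simp
  have c: "dist (toV (f (Inl 1))) (toV (f (Inr 0))) = 1" using W(2)[of 1 0] n k by simp
  have i: "in_Rn 1 (f (Inl 0))" "in_Rn 1 (f (Inl 1))" "in_Rn 1 (f (Inr 0))"
    using W(5)[of 0] W(5)[of 1] W(6)[of 0] n k by auto
  show False using a b c unfolding in_R1_dist[OF i(1) i(2)] in_R1_dist[OF i(1) i(3)] in_R1_dist[OF i(2) i(3)]
    by arith
qed

lemma no_R2: assumes n: "n \<ge> 3" "n \<noteq> 6" and k: "k \<ge> 1" shows "\<not> unit_dist_embedding (wheel n k) 2 f"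
proof
  assume f: "unit_dist_embedding (wheel n k) 2 f"
  note W = wheel_data[OF f _ n(1)]
  define P where "P = (\<lambda>i. toV (f (Inl i)))"
  define H where "H = (\<lambda>j. toV (f (Inr j)))"
  define x where "x = (\<lambda>j. P (j mod n) - H 0)"
  have n0: "n > 0" using n by simp
  show False
  proof (rule cyclen_false[of e2 e3 x n])
    show "e2 \<noteq> 0" "e3 \<noteq> 0" "inner e2 e3 = 0" by (rule e2_nz e3_nz e23)+
    fix j
    have i1: "in_Rn 2 (f (Inl (j mod n)))" "in_Rn 2 (f (Inr 0))" using W(5,6) n0 k by auto
    show "inner (x j) e2 = 0" "inner (x j) e3 = 0"
      unfolding x_def P_def H_def using toV_e2[OF i1(1)] toV_e2[OF i1(2)]
        toV_e3[OF in_Rn_mono[OF i1(1)]] toV_e3[OF in_Rn_mono[OF i1(2)]]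
      by (simp_all add: inner_diff_left)
    show "inner (x j) (x j) = 1" unfolding x_def
      using dist1[OF W(2)[of "j mod n" 0]] n0 k by (simp add: P_def H_def)
    show "dist (x j) (x (j + 1)) = 1" unfolding x_def dist_sub
      using W(1)[of "j mod n"] n0 by (simp add: P_def mod_Suc_eq)
    show "x (j + 2) \<noteq> x j"
      unfolding x_def using W(3)[of "(j+2) mod n" "j mod n"] mod_add2_ne[OF n(1)] n0
      by (auto simp: P_def)
    show "x (j + n) = x j" by (simp add: x_def)
  next
    fix i i' assume "i < n" "i' < n" "x i = x i'"
    thus "i = i'" using W(3)[of i i'] by (simp add: x_def P_def)
  qed (use n in auto)
qed

lemma gs_orth: "(u::V) \<noteq> 0 \<Longrightarrow> inner u (v - (inner v u / inner u u) *\<^sub>R u) = 0"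
  by (simp add: inner_diff_right inner_commute)

lemma six_core:
  fixes P :: "nat \<Rightarrow> V" and h e f :: V
  assumes d: "\<And>i. i < 6 \<Longrightarrow> dist (P i) (P ((i+1) mod 6)) = 1"
  and inj: "\<And>i i'. i < 6 \<Longrightarrow> i' < 6 \<Longrightarrow> P i = P i' \<Longrightarrow> i = i'"
  and E: "e \<noteq> 0" "f \<noteq> 0" "inner e f = 0"
  and gg: "\<And>i. i < 6 \<Longrightarrow> inner (P i - h) (P i - h) = 1"
  and ge: "\<And>i. i < 6 \<Longrightarrow> inner (P i - h) e = inner e e / 2"
  and gf: "\<And>i. i < 6 \<Longrightarrow> inner (P i - h) f = aa"
  shows False
proof -
  define c0 where "c0 = (1/2) *\<^sub>R e + (aa / inner f f) *\<^sub>R f"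
  define x where "x = (\<lambda>j. P (j mod 6) - h - c0)"
  define R where "R = 1 - inner e e / 4 - aa^2 / inner f f"
  have m: "\<And>j::nat. j mod 6 < 6" by simp
  note C = center3[OF E(3) E(2) gg[OF m] ge[OF m] gf[OF m], folded c0_def]
  have R1: "R < 1"
  proof -
    have "inner e e > 0" using E(1) by simp
    moreover have "aa^2 / inner f f \<ge> 0" by simp
    ultimately show ?thesis unfolding R_def by linarith
  qed
  show False
  proof (rule cycle6_false[OF E, of x R])
    fix j
    show "inner (x j) e = 0" "inner (x j) f = 0" "inner (x j) (x j) = R"
      using C[of j] by (simp_all add: x_def R_def)
    show "dist (x j) (x (j + 1)) = 1"
      unfolding x_def dist_sub using d[of "j mod 6"] by (simp add: mod_Suc_eq)
    show "x (j + 2) \<noteq> x j"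
      unfolding x_def using inj[of "(j+2) mod 6" "j mod 6"] mod_add2_ne[of 6 j] by auto
  next
    show "x 6 = x 0" by (simp add: x_def)
    show "x 3 \<noteq> x 0" using inj[of 3 0] by (auto simp: x_def)
  qed (rule R1)
qed

lemma no_R3_62: "\<not> unit_dist_embedding (wheel 6 2) 3 f"
proof
  assume f: "unit_dist_embedding (wheel 6 2) 3 f"
  note W = wheel_data[OF f _ , simplified]
  define P where "P = (\<lambda>i. toV (f (Inl i)))"
  define H where "H = (\<lambda>j. toV (f (Inr j)))"
  have H01: "H 1 \<noteq> H 0" using W(4)[of 1 0] by (auto simp: H_def)
  show False
  proof (rule six_core[of P, where h = "H 0" and e = "H 1 - H 0" and f = e3 and aa = 0])
    show "\<And>i. i < 6 \<Longrightarrow> dist (P i) (P ((i + 1) mod 6)) = 1" using W(1) by (simp add: P_def)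
    show "\<And>i i'. i < 6 \<Longrightarrow> i' < 6 \<Longrightarrow> P i = P i' \<Longrightarrow> i = i'" using W(3) by (simp add: P_def)
    show "H 1 - H 0 \<noteq> 0" "e3 \<noteq> 0" using H01 e3_nz by auto
    show "inner (H 1 - H 0) e3 = 0"
      using toV_e3[OF W(6)[of 1]] toV_e3[OF W(6)[of 0]] by (simp add: H_def inner_diff_left)
    fix i :: nat assume i: "i < 6"
    have d0: "dist (P i) (H 0) = 1" and d1: "dist (P i) (H 1) = 1" using W(2) i by (auto simp: P_def H_def)
    show "inner (P i - H 0) (P i - H 0) = 1" by (rule dist1[OF d0])
    show "inner (P i - H 0) (H 1 - H 0) = inner (H 1 - H 0) (H 1 - H 0) / 2" by (rule g_e[OF d0 d1])
    show "inner (P i - H 0) e3 = 0"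
      using toV_e3[OF W(5)[OF i]] toV_e3[OF W(6)[of 0]] by (simp add: H_def P_def inner_diff_left)
  qed
qed

lemma no_R4_6k: assumes k: "k \<ge> 3" shows "\<not> unit_dist_embedding (wheel 6 k) 4 f"
proof
  assume f: "unit_dist_embedding (wheel 6 k) 4 f"
  note W = wheel_data[OF f _ , simplified]
  define P where "P = (\<lambda>i. toV (f (Inl i)))"
  define H where "H = (\<lambda>j. toV (f (Inr j)))"
  define e where "e = H 1 - H 0"
  define t where "t = inner (H 2 - H 0) e / inner e e"
  define f' where "f' = (H 2 - H 0) - t *\<^sub>R e"
  define a2 where "a2 = inner (H 2 - H 0) (H 2 - H 0) / 2 - t * (inner e e / 2)"
  have Hd: "H 1 \<noteq> H 0" "H 2 \<noteq> H 0" "H 2 \<noteq> H 1" using W(4)[of 1 0] W(4)[of 2 0] W(4)[of 2 1] k by (auto simp: H_def)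
  have dPH: "\<And>i j. i < 6 \<Longrightarrow> j < k \<Longrightarrow> dist (P i) (H j) = 1" using W(2) by (simp add: P_def H_def)
  have e0: "e \<noteq> 0" using Hd by (simp add: e_def)
  have f'0: "f' \<noteq> 0" unfolding f'_def t_def e_def
    by (rule collinear_lemma[of "P 0"]) (use dPH k Hd in \<open>auto\<close>)
  have ef': "inner e f' = 0" using e0 by (simp add: f'_def t_def inner_diff_right inner_commute)
  show False
  proof (rule six_core[of P, where h = "H 0" and e = e and f = f' and aa = a2])
    show "\<And>i. i < 6 \<Longrightarrow> dist (P i) (P ((i + 1) mod 6)) = 1" using W(1) by (simp add: P_def)
    show "\<And>i i'. i < 6 \<Longrightarrow> i' < 6 \<Longrightarrow> P i = P i' \<Longrightarrow> i = i'" using W(3) by (simp add: P_def)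
    show "e \<noteq> 0" "f' \<noteq> 0" "inner e f' = 0" by (rule e0 f'0 ef')+
    fix i :: nat assume i: "i < 6"
    have d0: "dist (P i) (H 0) = 1" and d1: "dist (P i) (H 1) = 1" and d2: "dist (P i) (H 2) = 1"
      using dPH i k by auto
    show "inner (P i - H 0) (P i - H 0) = 1" by (rule dist1[OF d0])
    show ge: "inner (P i - H 0) e = inner e e / 2" unfolding e_def by (rule g_e[OF d0 d1])
    have gf: "inner (P i - H 0) (H 2 - H 0) = inner (H 2 - H 0) (H 2 - H 0) / 2" by (rule g_e[OF d0 d2])
    have "inner (P i - H 0) f' = inner (P i - H 0) (H 2 - H 0) - t * inner (P i - H 0) e"
      unfolding f'_def by (rule trans[OF inner_diff_right]) (simp only: inner_scaleR_right)
    also have "\<dots> = a2" unfolding a2_def ge gf ..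
    finally show "inner (P i - H 0) f' = a2" .
  qed
qed

lemma no_R3_k3: assumes n: "n \<ge> 3" and k: "k \<ge> 3" shows "\<not> unit_dist_embedding (wheel n k) 3 f"
proof
  assume f: "unit_dist_embedding (wheel n k) 3 f"
  note W = wheel_data[OF f _ n, simplified]
  define P where "P = (\<lambda>i. toV (f (Inl i)))"
  define H where "H = (\<lambda>j. toV (f (Inr j)))"
  define a where "a = P 1 - P 0"
  define b where "b = (P 2 - P 0) - (inner (P 2 - P 0) (P 1 - P 0) / inner (P 1 - P 0) (P 1 - P 0)) *\<^sub>R (P 1 - P 0)"
  define e where "e = H 1 - H 0"
  define f' where "f' = (H 2 - H 0) - (inner (H 2 - H 0) (H 1 - H 0) / inner (H 1 - H 0) (H 1 - H 0)) *\<^sub>R (H 1 - H 0)"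
  have Hd: "H 1 \<noteq> H 0" "H 2 \<noteq> H 0" "H 2 \<noteq> H 1" using W(4)[of 1 0] W(4)[of 2 0] W(4)[of 2 1] k by (auto simp: H_def)
  have Pd: "P 1 \<noteq> P 0" "P 2 \<noteq> P 0" "P 2 \<noteq> P 1" using W(3)[of 1 0] W(3)[of 2 0] W(3)[of 2 1] n by (auto simp: P_def)
  have dPH: "\<And>i j. i < n \<Longrightarrow> j < k \<Longrightarrow> dist (P i) (H j) = 1" using W(2) by (simp add: P_def H_def)
  have a0: "a \<noteq> 0" using Pd by (simp add: a_def)
  have e0: "e \<noteq> 0" using Hd by (simp add: e_def)
  have b0: "b \<noteq> 0" unfolding b_def
    by (rule collinear_lemma[of "H 0"]) (use dPH[of _ 0, unfolded dist_commute[of "P _"]] n k Pd in \<open>auto\<close>)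
  have f'0: "f' \<noteq> 0" unfolding f'_def
    by (rule collinear_lemma[of "P 0"]) (use dPH n k Hd in \<open>auto\<close>)
  have cr: "\<And>i i' j j'. i < n \<Longrightarrow> i' < n \<Longrightarrow> j < k \<Longrightarrow> j' < k \<Longrightarrow> inner (P i' - P i) (H j' - H j) = 0"
    by (rule cross_lemma) (auto intro: dPH)
  have ae: "inner a e = 0" unfolding a_def e_def using cr[of 0 1 0 1] n k by simp
  have af: "inner a f' = 0" unfolding a_def f'_def using cr[of 0 1 0 1] cr[of 0 1 0 2] n k
    by (simp add: inner_diff_right)
  have be: "inner b e = 0" unfolding b_def e_def using cr[of 0 1 0 1] cr[of 0 2 0 1] n k
    by (simp add: inner_diff_left)
  have bf: "inner b f' = 0" unfolding b_def f'_def using cr[of 0 1 0 1] cr[of 0 2 0 1] cr[of 0 1 0 2] cr[of 0 2 0 2] n k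
    by (simp add: inner_diff_left inner_diff_right)
  have ab: "inner a b = 0" unfolding b_def a_def by (rule gs_orth) (use Pd in simp)
  have ef: "inner e f' = 0" unfolding e_def f'_def by (rule gs_orth) (use Hd in simp)
  have i3: "\<And>v. in_Rn 3 v \<Longrightarrow> inner (toV v) e3 = 0" by (rule toV_e3)
  have P3: "\<And>i. i < n \<Longrightarrow> inner (P i) e3 = 0" using W(5) i3 by (simp add: P_def)
  have H3: "\<And>j. j < k \<Longrightarrow> inner (H j) e3 = 0" using W(6) i3 by (simp add: H_def)
  have a3: "inner a e3 = 0" "inner b e3 = 0" using P3[of 0] P3[of 1] P3[of 2] n
    by (simp_all add: a_def b_def inner_diff_left)
  have e3': "inner e e3 = 0" "inner f' e3 = 0" using H3[of 0] H3[of 1] H3[of 2] k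
    by (simp_all add: e_def f'_def inner_diff_left)
  show False
    by (rule five_orth[OF a0 b0 e0 f'0 e3_nz ab ae af a3(1) be bf a3(2) ef e3'])
qed

lemma on_segment_sym: "on_segment p a b \<Longrightarrow> on_segment p b a"
proof -
  assume "on_segment p a b"
  then obtain t where t: "0 \<le> t" "t \<le> 1" "p = (\<lambda>i. (1 - t) * a i + t * b i)" unfolding on_segment_def by blast
  have "p = (\<lambda>i. (1 - (1 - t)) * b i + (1 - t) * a i)" using t(3) by (simp add: algebra_simps)
  thus ?thesis unfolding on_segment_def using t(1,2) by (intro exI[of _ "1 - t"]) auto
qed

lemma edist_sym: "edist d x y = edist d y x"
  unfolding edist_def by (simp add: power2_commute)

definition emb :: "(nat \<Rightarrow> nat \<Rightarrow> real) \<Rightarrow> (nat \<Rightarrow> nat \<Rightarrow> real) \<Rightarrow> nat + nat \<Rightarrow> nat \<Rightarrow> real" where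
  "emb c q v = (case v of Inl i \<Rightarrow> c i | Inr j \<Rightarrow> q j)"

lemma GC:
  assumes n: "n \<ge> 3"
  and cin: "\<And>i. i < n \<Longrightarrow> in_Rn D (c i)" and qin: "\<And>j. j < k \<Longrightarrow> in_Rn D (q j)"
  and cinj: "\<And>i i'. i < n \<Longrightarrow> i' < n \<Longrightarrow> c i = c i' \<Longrightarrow> i = i'"
  and qinj: "\<And>j j'. j < k \<Longrightarrow> j' < k \<Longrightarrow> q j = q j' \<Longrightarrow> j = j'"
  and cq: "\<And>i j. i < n \<Longrightarrow> j < k \<Longrightarrow> c i \<noteq> q j"
  and ce: "\<And>i. i < n \<Longrightarrow> edist D (c i) (c (Suc i mod n)) = 1"
  and sp: "\<And>i j. i < n \<Longrightarrow> j < k \<Longrightarrow> edist D (c i) (q j) = 1"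
  and N1: "\<And>u w. u < n \<Longrightarrow> w < n \<Longrightarrow> w \<noteq> u \<Longrightarrow> w \<noteq> Suc u mod n \<Longrightarrow> \<not> on_segment (c w) (c u) (c (Suc u mod n))"
  and N2: "\<And>u j. u < n \<Longrightarrow> j < k \<Longrightarrow> \<not> on_segment (q j) (c u) (c (Suc u mod n))"
  and N3: "\<And>i j w. i < n \<Longrightarrow> j < k \<Longrightarrow> w < n \<Longrightarrow> w \<noteq> i \<Longrightarrow> \<not> on_segment (c w) (c i) (q j)"
  and N4: "\<And>i j l. i < n \<Longrightarrow> j < k \<Longrightarrow> l < k \<Longrightarrow> l \<noteq> j \<Longrightarrow> \<not> on_segment (q l) (c i) (q j)"
  shows "unit_dist_embedding (wheel n k) D (emb c q)"
  unfolding unit_dist_embedding_def verts_wheel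
proof (intro conjI)
  have N1': "\<And>u w. u < n \<Longrightarrow> w < n \<Longrightarrow> w \<noteq> u \<Longrightarrow> w \<noteq> Suc u mod n \<Longrightarrow> \<not> on_segment (c w) (c (Suc u mod n)) (c u)"
    using N1 on_segment_sym by blast
  have N2': "\<And>u j. u < n \<Longrightarrow> j < k \<Longrightarrow> \<not> on_segment (q j) (c (Suc u mod n)) (c u)"
    using N2 on_segment_sym by blast
  have N3': "\<And>i j w. i < n \<Longrightarrow> j < k \<Longrightarrow> w < n \<Longrightarrow> w \<noteq> i \<Longrightarrow> \<not> on_segment (c w) (q j) (c i)"
    using N3 on_segment_sym by blast
  have N4': "\<And>i j l. i < n \<Longrightarrow> j < k \<Longrightarrow> l < k \<Longrightarrow> l \<noteq> j \<Longrightarrow> \<not> on_segment (q l) (q j) (c i)"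
    using N4 on_segment_sym by blast
  show "\<forall>v\<in>Inl ` {0..<n} \<union> Inr ` {0..<k}. in_Rn D (emb c q v)"
    using cin qin by (auto simp: emb_def)
  show "inj_on (emb c q) (Inl ` {0..<n} \<union> Inr ` {0..<k})"
    unfolding inj_on_def using cinj qinj cq by (auto simp: emb_def) (metis cq)+
  show "\<forall>u\<in>Inl ` {0..<n} \<union> Inr ` {0..<k}. \<forall>v\<in>Inl ` {0..<n} \<union> Inr ` {0..<k}.
      adj (wheel n k) u v \<longrightarrow> edist D (emb c q u) (emb c q v) = 1"
    using ce sp by (auto simp: emb_def adj_wheel_ll adj_wheel_lr adj_wheel_rl adj_wheel_rr edist_sym)
  show "\<forall>u\<in>Inl ` {0..<n} \<union> Inr ` {0..<k}. \<forall>v\<in>Inl ` {0..<n} \<union> Inr ` {0..<k}. \<forall>w\<in>Inl ` {0..<n} \<union> Inr ` {0..<k}.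
      adj (wheel n k) u v \<and> w \<noteq> u \<and> w \<noteq> v \<longrightarrow> \<not> on_segment (emb c q w) (emb c q u) (emb c q v)"
    using N1 N2 N3 N4 N1' N2' N3' N4'
    by (auto simp: emb_def adj_wheel_ll adj_wheel_lr adj_wheel_rl adj_wheel_rr) (meson N1 N2 N3 N4 N1' N2' N3' N4')+
qed

lemma sum_sq_pos: assumes "in_Rn D u" "in_Rn D v" "u \<noteq> v" shows "(\<Sum>l<D. (u l - v l)^2) > 0"
proof -
  obtain l where l: "u l \<noteq> v l" using assms(3) by auto
  hence lD: "l < D" using assms(1,2) by (auto simp: in_Rn_def) (metis not_le)
  have "(u l - v l)^2 \<le> (\<Sum>l<D. (u l - v l)^2)"
    by (rule member_le_sum[where f = "\<lambda>l. (u l - v l)^2"]) (use lD in auto)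
  moreover have "(u l - v l)^2 > 0" using l by simp
  ultimately show ?thesis by linarith
qed

lemma sphere_nondeg:
  assumes u: "in_Rn D u" and v: "in_Rn D v"
  and nu: "(\<Sum>l<D. (u l)^2) = R" and nv: "(\<Sum>l<D. (v l)^2) = R" and nw: "(\<Sum>l<D. (w l)^2) = R"
  and uv: "u \<noteq> v" and wu: "w \<noteq> u" and wv: "w \<noteq> v"
  shows "\<not> on_segment w u v"
proof
  assume "on_segment w u v"
  then obtain t where t: "0 \<le> t" "t \<le> 1" and w: "w = (\<lambda>i. (1 - t) * u i + t * v i)" unfolding on_segment_def by blast
  define S where "S = (\<Sum>l<D. u l * v l)"
  have "(\<Sum>l<D. (w l)^2) = (\<Sum>l<D. (1-t)^2 * (u l)^2 + t^2 * (v l)^2 + (2*t*(1-t)) * (u l * v l))"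
    unfolding w by (rule sum.cong) (auto simp: power2_eq_square algebra_simps)
  also have "\<dots> = (1-t)^2 * R + t^2 * R + 2*t*(1-t)*S"
    by (simp add: sum.distrib sum_distrib_left[symmetric] nu nv S_def)
  finally have e1: "R = (1-t)^2 * R + t^2 * R + 2*t*(1-t)*S" using nw by simp
  have "(\<Sum>l<D. (u l - v l)^2) = (\<Sum>l<D. (u l)^2 + (v l)^2 - 2 * (u l * v l))"
    by (rule sum.cong) (auto simp: power2_eq_square algebra_simps)
  also have "\<dots> = 2 * R - 2 * S" by (simp add: sum.distrib sum_subtractf sum_distrib_left[symmetric] nu nv S_def)
  finally have "2 * R - 2 * S > 0" using sum_sq_pos[OF u v uv] by simp
  moreover have "2*t*(1-t)*(R - S) = 0" using e1 by (simp add: power2_eq_square algebra_simps)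
  ultimately have "t = 0 \<or> t = 1" by simp
  thus False using w wu wv by auto
qed

lemma DS:
  assumes n: "n \<ge> 3" and aD: "a \<le> D"
  and cin: "\<And>i. i < n \<Longrightarrow> in_Rn a (c i)"
  and qin: "\<And>j. j < k \<Longrightarrow> in_Rn D (q j)" and qlow: "\<And>j l. j < k \<Longrightarrow> l < a \<Longrightarrow> q j l = 0"
  and cn: "\<And>i. i < n \<Longrightarrow> (\<Sum>l<D. (c i l)^2) = R"
  and qn: "\<And>j. j < k \<Longrightarrow> (\<Sum>l<D. (q j l)^2) = 1 - R"
  and cnz: "\<And>i. i < n \<Longrightarrow> \<exists>l. c i l \<noteq> 0"
  and qnz: "\<And>j. j < k \<Longrightarrow> \<exists>l. q j l \<noteq> 0"
  and cinj: "\<And>i i'. i < n \<Longrightarrow> i' < n \<Longrightarrow> c i = c i' \<Longrightarrow> i = i'"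
  and qinj: "\<And>j j'. j < k \<Longrightarrow> j' < k \<Longrightarrow> q j = q j' \<Longrightarrow> j = j'"
  and ce: "\<And>i. i < n \<Longrightarrow> edist D (c i) (c (Suc i mod n)) = 1"
  shows "unit_dist_embedding (wheel n k) D (emb c q)"
proof -
  have cinD: "\<And>i. i < n \<Longrightarrow> in_Rn D (c i)" using cin in_Rn_mono[OF _ aD] by blast
  have qhigh: "\<And>j. j < k \<Longrightarrow> \<exists>l. a \<le> l \<and> q j l \<noteq> 0"
    using qnz qlow by (meson not_le)
  have clow: "\<And>i. i < n \<Longrightarrow> \<exists>l. l < a \<and> c i l \<noteq> 0"
    using cnz cin by (metis in_Rn_def not_le)
  have chigh: "\<And>i l. i < n \<Longrightarrow> a \<le> l \<Longrightarrow> c i l = 0" using cin by (simp add: in_Rn_def)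
  have prod0: "\<And>i j l. i < n \<Longrightarrow> j < k \<Longrightarrow> c i l * q j l = 0"
    using chigh qlow by (metis mult_eq_0_iff not_le)
  show ?thesis
  proof (rule GC[OF n cinD qin cinj qinj])
    fix i j assume i: "i < n" and j: "j < k"
    show "c i \<noteq> q j"
    proof
      assume "c i = q j"
      obtain l where "a \<le> l" "q j l \<noteq> 0" using qhigh[OF j] by blast
      thus False using chigh[OF i] \<open>c i = q j\<close> by metis
    qed
    have "(\<Sum>l<D. (c i l - q j l)^2) = (\<Sum>l<D. (c i l)^2 + (q j l)^2)"
      by (rule sum.cong) (use prod0[OF i j] in \<open>auto simp: power2_eq_square algebra_simps\<close>)
    also have "\<dots> = 1" using cn[OF i] qn[OF j] by (simp add: sum.distrib)
    finally show "edist D (c i) (q j) = 1" by (simp add: edist_def)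
  next
    fix i assume "i < n" thus "edist D (c i) (c (Suc i mod n)) = 1" by (rule ce)
  next
    fix u w assume u: "u < n" and w: "w < n" "w \<noteq> u" "w \<noteq> Suc u mod n"
    have s: "Suc u mod n < n" using n by simp
    have us: "u \<noteq> Suc u mod n" using u n by (auto simp: mod_Suc)
    show "\<not> on_segment (c w) (c u) (c (Suc u mod n))"
      by (rule sphere_nondeg[OF cinD[OF u] cinD[OF s] cn[OF u] cn[OF s] cn[OF w(1)]])
         (use cinj u s w us in blast)+
  next
    fix u j assume u: "u < n" and j: "j < k"
    show "\<not> on_segment (q j) (c u) (c (Suc u mod n))"
    proof
      assume "on_segment (q j) (c u) (c (Suc u mod n))"
      then obtain t where e: "q j = (\<lambda>l. (1 - t) * c u l + t * c (Suc u mod n) l)" unfolding on_segment_def by blast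
      obtain l where "a \<le> l" "q j l \<noteq> 0" using qhigh[OF j] by blast
      moreover have "Suc u mod n < n" using n by simp
      ultimately show False using fun_cong[OF e, of l] chigh[OF u] chigh[of "Suc u mod n"] by simp
    qed
  next
    fix i j w assume i: "i < n" and j: "j < k" and w: "w < n" "w \<noteq> i"
    show "\<not> on_segment (c w) (c i) (q j)"
    proof
      assume "on_segment (c w) (c i) (q j)"
      then obtain t where e: "c w = (\<lambda>l. (1 - t) * c i l + t * q j l)" unfolding on_segment_def by blast
      obtain l where l: "a \<le> l" "q j l \<noteq> 0" using qhigh[OF j] by blast
      have "0 = (1 - t) * 0 + t * q j l" using fun_cong[OF e, of l] chigh[OF i l(1)] chigh[OF w(1) l(1)] by simp
      hence "t = 0" using l(2) by simp
      hence "c w = c i" using e by simp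
      thus False using cinj[OF w(1) i] w(2) by simp
    qed
  next
    fix i j l' assume i: "i < n" and j: "j < k" and l': "l' < k" "l' \<noteq> j"
    show "\<not> on_segment (q l') (c i) (q j)"
    proof
      assume "on_segment (q l') (c i) (q j)"
      then obtain t where e: "q l' = (\<lambda>l. (1 - t) * c i l + t * q j l)" unfolding on_segment_def by blast
      obtain l where l: "l < a" "c i l \<noteq> 0" using clow[OF i] by blast
      have "0 = (1 - t) * c i l + t * 0" using fun_cong[OF e, of l] qlow[OF j l(1)] qlow[OF l'(1) l(1)] by simp
      hence "t = 1" using l(2) by simp
      hence "q l' = q j" using e by simp
      thus False using qinj[OF l'(1) j] l'(2) by simp
    qed
  qed
qed

lemma sumsq_mono: assumes "in_Rn a x" "a \<le> D" shows "(\<Sum>l<D. (x l)^2) = (\<Sum>l<a. (x l)^2)"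
  by (rule sum.mono_neutral_right) (use assms in \<open>auto simp: in_Rn_def\<close>)

definition qA :: "real \<Rightarrow> nat \<Rightarrow> nat \<Rightarrow> nat \<Rightarrow> real" where
  "qA \<rho> a j = (\<lambda>l. if l = a then (if j = 0 then \<rho> else - \<rho>) else 0)"

definition qB :: "real \<Rightarrow> nat \<Rightarrow> nat \<Rightarrow> nat \<Rightarrow> real" where
  "qB \<rho> a j = (\<lambda>l. if l = a then \<rho> * (1 - (real j)^2) / (1 + (real j)^2)
                   else if l = Suc a then \<rho> * (2 * real j) / (1 + (real j)^2) else 0)"

lemma qA_in: "in_Rn (Suc a) (qA \<rho> a j)" by (simp add: qA_def in_Rn_def)
lemma qA_low: "l < a \<Longrightarrow> qA \<rho> a j l = 0" by (simp add: qA_def)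
lemma qA_sum: "a < D \<Longrightarrow> (\<Sum>l<D. (qA \<rho> a j l)^2) = \<rho>^2"
proof -
  assume "a < D"
  have "(\<Sum>l<D. (qA \<rho> a j l)^2) = (\<Sum>l<D. if l = a then \<rho>^2 else 0)"
    by (rule sum.cong) (auto simp: qA_def)
  thus ?thesis using \<open>a < D\<close> by simp
qed
lemma qA_nz: "\<rho> \<noteq> 0 \<Longrightarrow> \<exists>l. qA \<rho> a j l \<noteq> 0" by (auto simp: qA_def intro!: exI[of _ a])
lemma qA_inj: "\<rho> \<noteq> 0 \<Longrightarrow> j < 2 \<Longrightarrow> j' < 2 \<Longrightarrow> qA \<rho> a j = qA \<rho> a j' \<Longrightarrow> j = j'"
proof -
  assume h: "\<rho> \<noteq> 0" "j < 2" "j' < 2" "qA \<rho> a j = qA \<rho> a j'"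
  from fun_cong[OF h(4), of a] have "(if j = 0 then \<rho> else - \<rho>) = (if j' = 0 then \<rho> else - \<rho>)" by (simp add: qA_def)
  thus "j = j'" using h(1-3) by (auto split: if_splits)
qed

lemma qB_in: "in_Rn (Suc (Suc a)) (qB \<rho> a j)" by (simp add: qB_def in_Rn_def)
lemma qB_low: "l < a \<Longrightarrow> qB \<rho> a j l = 0" by (simp add: qB_def)
lemma qB_sum: assumes "Suc a < D" shows "(\<Sum>l<D. (qB \<rho> a j l)^2) = \<rho>^2"
proof -
  define x where "x = real j"
  have "(\<Sum>l<D. (qB \<rho> a j l)^2) = (\<Sum>l<D. (if l = a then (\<rho> * (1 - x^2) / (1 + x^2))^2 else 0) +
           (if l = Suc a then (\<rho> * (2 * x) / (1 + x^2))^2 else 0))"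
    by (rule sum.cong) (auto simp: qB_def x_def)
  also have "\<dots> = (\<rho> * (1 - x^2) / (1 + x^2))^2 + (\<rho> * (2 * x) / (1 + x^2))^2"
    using assms by (simp add: sum.distrib)
  also have "\<dots> = \<rho>^2"
  proof -
    have p: "1 + x^2 > 0" by (simp add: add_pos_nonneg)
    have "(1 - x^2)^2 + (2*x)^2 = (1 + x^2)^2" by (simp add: power2_eq_square algebra_simps)
    thus ?thesis using p by (simp add: power_divide power_mult_distrib field_simps) (simp add: algebra_simps power2_eq_square)
  qed
  finally show ?thesis .
qed
lemma qB_nz: "\<rho> \<noteq> 0 \<Longrightarrow> \<exists>l. qB \<rho> a j l \<noteq> 0"
proof -
  assume r: "\<rho> \<noteq> 0"
  have p: "1 + (real j)^2 > 0" by (simp add: add_pos_nonneg)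
  show ?thesis
  proof (cases "j = 1")
    case True thus ?thesis using r by (auto simp: qB_def intro!: exI[of _ "Suc a"])
  next
    case False
    have "(real j)^2 \<noteq> 1" using False by (auto simp: power2_eq_1_iff)
    hence "1 - (real j)^2 \<noteq> 0" by simp
    thus ?thesis using r p by (auto simp: qB_def intro!: exI[of _ a])
  qed
qed
lemma qB_inj: assumes "\<rho> \<noteq> 0" "qB \<rho> a j = qB \<rho> a j'" shows "j = j'"
proof -
  define x where "x = (real j)^2"
  define y where "y = (real j')^2"
  have px: "1 + x > 0" and py: "1 + y > 0" by (simp_all add: x_def y_def add_pos_nonneg)
  from fun_cong[OF assms(2), of a] have "\<rho> * (1 - x) / (1 + x) = \<rho> * (1 - y) / (1 + y)" by (simp add: qB_def x_def y_def)
  hence "(1 - x) * (1 + y) = (1 - y) * (1 + x)" using assms(1) px py by (simp add: field_simps)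
  hence "x = y" by (simp add: algebra_simps)
  thus "j = j'" unfolding x_def y_def by simp
qed

definition X6 :: "nat \<Rightarrow> real" where "X6 i = (if i = 0 \<or> i = 1 \<or> i = 5 then 1/2 else -1/2)"
definition Y6 :: "nat \<Rightarrow> real" where "Y6 i = (if i = 1 \<or> i = 2 \<or> i = 3 then 1/2 else -1/2)"
definition Z6 :: "nat \<Rightarrow> real" where "Z6 i = (if i = 3 \<or> i = 4 \<or> i = 5 then 1/2 else -1/2)"
definition c6 :: "nat \<Rightarrow> nat \<Rightarrow> real" where
  "c6 i = (\<lambda>l. if l = 0 then X6 i else if l = 1 then Y6 i else if l = 2 then Z6 i else 0)"

lemma c6_in: "in_Rn 3 (c6 i)" by (simp add: c6_def in_Rn_def)
lemma c6_sum3: "(\<Sum>l<3. (c6 i l)^2) = 3/4"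
  by (simp add: eval_nat_numeral c6_def X6_def Y6_def Z6_def power2_eq_square)
lemma c6_sum: "3 \<le> D \<Longrightarrow> (\<Sum>l<D. (c6 i l)^2) = 3/4"
  using sumsq_mono[OF c6_in] c6_sum3 by simp
lemma c6_nz: "\<exists>l. c6 i l \<noteq> 0" by (auto simp: c6_def X6_def intro!: exI[of _ 0])
lemma six_cases: "(i::nat) < 6 \<Longrightarrow> i = 0 \<or> i = 1 \<or> i = 2 \<or> i = 3 \<or> i = 4 \<or> i = 5" by linarith
lemma c6_inj: assumes "i < 6" "i' < 6" "c6 i = c6 i'" shows "i = i'"
proof -
  have "X6 i = X6 i'" "Y6 i = Y6 i'" "Z6 i = Z6 i'"
    using fun_cong[OF assms(3), of 0] fun_cong[OF assms(3), of 1] fun_cong[OF assms(3), of 2] by (simp_all add: c6_def)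
  with six_cases[OF assms(1)] six_cases[OF assms(2)] show ?thesis
    by (elim disjE) (simp_all add: X6_def Y6_def Z6_def)
qed
lemma sum3: "(\<Sum>l<(3::nat). f l) = f 0 + f 1 + (f 2::real)"
proof -
  have "{..<3::nat} = {0,1,2}" by auto
  thus ?thesis by (simp add: add.assoc)
qed
lemma c6_edge3: assumes "i < 6" shows "(\<Sum>l<3. (c6 i l - c6 (Suc i mod 6) l)^2) = 1"
proof -
  have "i = 0 \<or> i = 1 \<or> i = 2 \<or> i = 3 \<or> i = 4 \<or> i = 5" using assms by linarith
  thus ?thesis unfolding sum3 by (elim disjE) (simp_all add: c6_def X6_def Y6_def Z6_def power2_eq_square)
qed
lemma c6_edge: assumes "i < 6" "3 \<le> D" shows "edist D (c6 i) (c6 (Suc i mod 6)) = 1"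
proof -
  have "edist D (c6 i) (c6 (Suc i mod 6)) = edist 3 (c6 i) (c6 (Suc i mod 6))"
    by (rule edist_mono[OF c6_in c6_in assms(2)])
  also have "\<dots> = 1" unfolding edist_def c6_edge3[OF assms(1)] by simp
  finally show ?thesis .
qed

lemma W62_R4: "unit_dist_embedding (wheel 6 2) 4 (emb c6 (qA (1/2) 3))"
proof -
  have f1: "\<And>i. i < 6 \<Longrightarrow> in_Rn 3 (c6 i)" by (rule c6_in)
  have f2: "\<And>j. j < 2 \<Longrightarrow> in_Rn 4 (qA (1/2) 3 j)" by (rule in_Rn_mono[OF qA_in]) simp
  have f3: "\<And>j l. j < 2 \<Longrightarrow> l < 3 \<Longrightarrow> qA (1/2) 3 j l = 0" by (rule qA_low)
  have f4: "\<And>i. i < 6 \<Longrightarrow> (\<Sum>l<4. (c6 i l)\<^sup>2) = 3/4" by (rule c6_sum) simp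
  have f5: "(\<Sum>l<4. (qA (1/2) 3 j l)\<^sup>2) = 1 - 3/4" if "j < 2" for j
  proof -
    have "(\<Sum>l<4. (qA (1/2) 3 j l)\<^sup>2) = (1/2)^2" by (rule qA_sum) simp
    thus ?thesis by (simp add: power2_eq_square)
  qed
  have f6: "\<And>i. i < 6 \<Longrightarrow> \<exists>l. c6 i l \<noteq> 0" by (rule c6_nz)
  have f7: "\<And>j. j < 2 \<Longrightarrow> \<exists>l. qA (1/2) 3 j l \<noteq> 0" by (rule qA_nz) simp
  have f8: "\<And>i i'. i < 6 \<Longrightarrow> i' < 6 \<Longrightarrow> c6 i = c6 i' \<Longrightarrow> i = i'" by (rule c6_inj)
  have f9: "\<And>j j'. j < 2 \<Longrightarrow> j' < 2 \<Longrightarrow> qA (1/2) 3 j = qA (1/2) 3 j' \<Longrightarrow> j = j'"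
    by (rule qA_inj[of "1/2" _ _ 3]) simp_all
  have f10: "\<And>i. i < 6 \<Longrightarrow> edist 4 (c6 i) (c6 (Suc i mod 6)) = 1" by (rule c6_edge) simp_all
  show ?thesis by (rule DS[where c=c6 and q="qA (1/2) 3" and n=6 and k=2 and D=4 and a=3 and R="3/4", OF _ _ f1 f2 f3 f4 f5 f6 f7 f8 f9 f10]) simp_all
qed

lemma W6k_R5: "unit_dist_embedding (wheel 6 k) 5 (emb c6 (qB (1/2) 3))"
proof -
  have f1: "\<And>i. i < 6 \<Longrightarrow> in_Rn 3 (c6 i)" by (rule c6_in)
  have f2: "\<And>j. j < k \<Longrightarrow> in_Rn 5 (qB (1/2) 3 j)" by (rule in_Rn_mono[OF qB_in]) simp
  have f3: "\<And>j l. j < k \<Longrightarrow> l < 3 \<Longrightarrow> qB (1/2) 3 j l = 0" by (rule qB_low)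
  have f4: "\<And>i. i < 6 \<Longrightarrow> (\<Sum>l<5. (c6 i l)\<^sup>2) = 3/4" by (rule c6_sum) simp
  have f5: "(\<Sum>l<5. (qB (1/2) 3 j l)\<^sup>2) = 1 - 3/4" if "j < k" for j
  proof -
    have "(\<Sum>l<5. (qB (1/2) 3 j l)\<^sup>2) = (1/2)^2" by (rule qB_sum) simp
    thus ?thesis by (simp add: power2_eq_square)
  qed
  have f6: "\<And>i. i < 6 \<Longrightarrow> \<exists>l. c6 i l \<noteq> 0" by (rule c6_nz)
  have f7: "\<And>j. j < k \<Longrightarrow> \<exists>l. qB (1/2) 3 j l \<noteq> 0" by (rule qB_nz) simp
  have f8: "\<And>i i'. i < 6 \<Longrightarrow> i' < 6 \<Longrightarrow> c6 i = c6 i' \<Longrightarrow> i = i'" by (rule c6_inj)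
  have f9: "\<And>j j'. j < k \<Longrightarrow> j' < k \<Longrightarrow> qB (1/2) 3 j = qB (1/2) 3 j' \<Longrightarrow> j = j'"
    by (rule qB_inj[of "1/2" 3]) simp_all
  have f10: "\<And>i. i < 6 \<Longrightarrow> edist 5 (c6 i) (c6 (Suc i mod 6)) = 1" by (rule c6_edge) simp_all
  show ?thesis by (rule DS[where c=c6 and q="qB (1/2) 3" and n=6 and k=k and D=5 and a=3 and R="3/4", OF _ _ f1 f2 f3 f4 f5 f6 f7 f8 f9 f10]) simp_all
qed

definition ang :: "nat \<Rightarrow> nat \<Rightarrow> real" where "ang n s = 2 * pi * real s / real n"
definition rp :: "nat \<Rightarrow> nat \<Rightarrow> real" where "rp n s = 1 / (2 * sin (pi * real s / real n))"
definition cp :: "nat \<Rightarrow> nat \<Rightarrow> nat \<Rightarrow> nat \<Rightarrow> real" where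
  "cp n s i = (\<lambda>l. if l = 0 then rp n s * cos (real i * ang n s) else if l = 1 then rp n s * sin (real i * ang n s) else 0)"

lemma sin_pos_ns: assumes "0 < s" "2 * s \<le> n" shows "sin (pi * real s / real n) > 0"
proof (rule sin_gt_zero)
  have n: "real n > 0" using assms by simp
  show "0 < pi * real s / real n" using assms n by simp
  have "real s / real n \<le> 1/2" using assms n by (simp add: field_simps)
  hence "pi * (real s / real n) \<le> pi * (1/2)" by (intro mult_left_mono) simp_all
  hence "pi * real s / real n \<le> pi / 2" by simp
  moreover have "pi / 2 < pi" using pi_gt_zero by simp
  ultimately show "pi * real s / real n < pi" by linarith
qed

lemma rp_pos: "0 < s \<Longrightarrow> 2 * s \<le> n \<Longrightarrow> rp n s > 0"
  using sin_pos_ns by (simp add: rp_def)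

lemma rp_lt1: assumes "0 < s" "2 * s \<le> n" "n < 6 * s" shows "rp n s < 1"
proof -
  have n: "real n > 0" using assms by simp
  have a: "real s / real n \<le> 1/2" using assms n by (simp add: field_simps)
  have b: "1/6 < real s / real n" using assms n by (simp add: field_simps)
  have "sin (pi/6) < sin (pi * real s / real n)"
  proof (rule sin_monotone_2pi)
    show "- (pi / 2) \<le> pi / 6" using pi_gt_zero by simp
    have "pi * (1/6) < pi * (real s / real n)" using b by (intro mult_strict_left_mono) simp_all
    thus "pi / 6 < pi * real s / real n" by simp
    have "pi * (real s / real n) \<le> pi * (1/2)" using a by (intro mult_left_mono) simp_all
    thus "pi * real s / real n \<le> pi / 2" by simp
  qed
  hence "sin (pi * real s / real n) > 1/2" by (simp add: sin_30)
  thus ?thesis by (simp add: rp_def)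
qed

lemma rp61: "rp 6 1 = 1" by (simp add: rp_def sin_30)

lemma cp_in: "in_Rn 2 (cp n s i)" by (simp add: cp_def in_Rn_def)

lemma sum2: "(\<Sum>l<(2::nat). f l) = f 0 + (f 1::real)"
proof -
  have "{..<2::nat} = {0,1}" by auto
  thus ?thesis by simp
qed

lemma sq2: "((r::real) * x)^2 + (r * y)^2 = r^2 * (y^2 + x^2)"
  by (simp add: power2_eq_square algebra_simps)

lemma cp_sum: assumes "2 \<le> D" shows "(\<Sum>l<D. (cp n s i l)^2) = (rp n s)^2"
proof -
  have "(\<Sum>l<D. (cp n s i l)^2) = (\<Sum>l<2. (cp n s i l)^2)" by (rule sumsq_mono[OF cp_in assms])
  also have "\<dots> = (rp n s * cos (real i * ang n s))^2 + (rp n s * sin (real i * ang n s))^2"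
    unfolding sum2 by (simp add: cp_def)
  also have "\<dots> = (rp n s)^2 * ((sin (real i * ang n s))^2 + (cos (real i * ang n s))^2)"
    by (rule sq2)
  finally show ?thesis by (simp only: sin_cos_squared_add mult_1_right)
qed

lemma cp_nz: assumes "rp n s \<noteq> 0" shows "\<exists>l. cp n s i l \<noteq> 0"
proof (cases "cos (real i * ang n s) = 0")
  case True
  hence "sin (real i * ang n s) \<noteq> 0" using sin_cos_squared_add[of "real i * ang n s"] by auto
  thus ?thesis using assms by (auto simp: cp_def intro!: exI[of _ 1])
next
  case False thus ?thesis using assms by (auto simp: cp_def intro!: exI[of _ 0])
qed

lemma cp_mod: assumes "n > 0" shows "cp n s (m mod n) = cp n s m"
proof -
  have "real m = real (m mod n) + real n * real (m div n)"
    by (metis mod_mult_div_eq of_nat_add of_nat_mult add.commute mult.commute)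
  hence "real m * ang n s = real (m mod n) * ang n s + 2 * pi * of_int (int (m div n * s))"
    using assms by (simp add: ang_def field_simps)
  hence "sin (real m * ang n s) = sin (real (m mod n) * ang n s) \<and> cos (real m * ang n s) = cos (real (m mod n) * ang n s)"
    using sin_cos_eq_iff by blast
  hence c1: "sin (real m * ang n s) = sin (real (m mod n) * ang n s)" and c2: "cos (real m * ang n s) = cos (real (m mod n) * ang n s)" by auto
  show ?thesis unfolding cp_def by (rule ext) (simp only: c1 c2)
qed

lemma trig_chord: "(cos (a::real) - cos (a + t))^2 + (sin a - sin (a + t))^2 = 2 - 2 * cos t"
proof -
  have 1: "(cos a - cos (a + t))^2 + (sin a - sin (a + t))^2 = ((sin a)^2 + (cos a)^2) + ((sin (a+t))^2 + (cos (a+t))^2) - 2 * (cos (a+t) * cos a + sin (a+t) * sin a)"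
    by (simp add: power2_eq_square algebra_simps)
  have 2: "cos (a+t) * cos a + sin (a+t) * sin a = cos t" using cos_diff[of "a+t" a] by simp
  show ?thesis unfolding 1 2 by simp
qed

lemma sq_factor: "((r::real) * x - r * y)^2 + (r * u - r * v)^2 = r^2 * ((x - y)^2 + (u - v)^2)"
  by (simp add: power2_eq_square algebra_simps)

lemma cp_edge_sum: assumes "n > 0" shows "(\<Sum>l<2. (cp n s i l - cp n s (Suc i mod n) l)^2) = (2 * rp n s * sin (pi * real s / real n))^2"
proof -
  have suc: "real (Suc i) * ang n s = real i * ang n s + ang n s" by (simp add: algebra_simps)
  have "(\<Sum>l<2. (cp n s i l - cp n s (Suc i mod n) l)^2) = (\<Sum>l<2. (cp n s i l - cp n s (Suc i) l)^2)"
    using cp_mod[OF assms, of s "Suc i"] by simp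
  also have "\<dots> = (rp n s * cos (real i * ang n s) - rp n s * cos (real i * ang n s + ang n s))^2
      + (rp n s * sin (real i * ang n s) - rp n s * sin (real i * ang n s + ang n s))^2"
    unfolding sum2 cp_def suc by simp
  also have "\<dots> = (rp n s)^2 * (2 - 2 * cos (ang n s))" unfolding sq_factor trig_chord ..
  also have "cos (ang n s) = 1 - 2 * (sin (pi * real s / real n))^2"
  proof -
    have eq: "ang n s = 2 * (pi * real s / real n)" by (simp add: ang_def)
    show ?thesis by (subst eq) (rule cos_double_sin)
  qed
  finally show ?thesis by (simp add: power2_eq_square algebra_simps)
qed

lemma cp_edge: assumes "0 < s" "2 * s \<le> n" "2 \<le> D"
  shows "edist D (cp n s i) (cp n s (Suc i mod n)) = 1"
proof -
  have n: "n > 0" using assms by simp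
  have "edist D (cp n s i) (cp n s (Suc i mod n)) = edist 2 (cp n s i) (cp n s (Suc i mod n))"
    by (rule edist_mono[OF cp_in cp_in assms(3)])
  also have "\<dots> = sqrt ((2 * rp n s * sin (pi * real s / real n))^2)"
    unfolding edist_def cp_edge_sum[OF n] ..
  also have "2 * rp n s * sin (pi * real s / real n) = 1"
    using sin_pos_ns[OF assms(1,2)] by (simp add: rp_def)
  finally show ?thesis by simp
qed

lemma cp_inj: assumes cop: "coprime n s" and n: "n > 0" and r: "rp n s \<noteq> 0"
  and i: "i < n" "i' < n" and e: "cp n s i = cp n s i'" shows "i = i'"
proof -
  have "cos (real i * ang n s) = cos (real i' * ang n s)" "sin (real i * ang n s) = sin (real i' * ang n s)"
    using fun_cong[OF e, of 0] fun_cong[OF e, of 1] r by (simp_all add: cp_def)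
  then obtain m :: int where m: "real i * ang n s = real i' * ang n s + 2 * pi * m"
    using sin_cos_eq_iff by metis
  hence "pi * (real i * real s * 2) = pi * ((of_int m * real n + real i' * real s) * 2)"
    using n by (simp add: ang_def field_simps algebra_simps)
  hence "real i * real s * 2 = (of_int m * real n + real i' * real s) * 2"
    using pi_gt_zero by (metis mult_left_cancel less_irrefl)
  hence "real i * real s = real i' * real s + of_int m * real n" by simp
  hence "int i * int s = int i' * int s + m * int n"
    by (metis (mono_tags) of_int_eq_iff of_int_add of_int_mult of_int_of_nat_eq)
  hence "int n dvd (int i - int i') * int s" by (simp add: algebra_simps)
  moreover have "coprime (int n) (int s)" using cop by simp
  ultimately have d: "int n dvd int i - int i'" using coprime_dvd_mult_left_iff by blast
  show ?thesis
  proof (rule ccontr)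
    assume "i \<noteq> i'"
    hence "int i - int i' \<noteq> 0" by simp
    from dvd_imp_le_int[OF this d] have "int n \<le> \<bar>int i - int i'\<bar>" by simp
    thus False using i by linarith
  qed
qed

lemma exists_s: assumes "(n::nat) \<ge> 3" "n \<noteq> 6"
  shows "\<exists>s. 0 < s \<and> 2 * s \<le> n \<and> n < 6 * s \<and> coprime n s"
proof (cases "even n")
  case False
  then obtain m where m: "n = 2 * m + 1" by (metis oddE)
  have "gcd m (2 * m + 1) = 1" using gcd_add_mult[of m 2 1] by simp
  hence "coprime n m" using m by (simp add: coprime_iff_gcd_eq_1 gcd.commute)
  thus ?thesis using m assms by (intro exI[of _ m]) auto
next
  case True
  then obtain m where m: "n = 2 * m" by blast
  show ?thesis
  proof (cases "even m")
    case True
    define p where "p = m - 1"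
    have p: "m = p + 1" using m assms True by (simp add: p_def)
    have podd: "odd p" using True p by simp
    have "gcd p (2 * p + 2) = gcd p 2" using gcd_add_mult[of p 2 2] by simp
    also have "\<dots> = 1" using podd by (simp add: coprime_iff_gcd_eq_1[symmetric] )
    finally have "coprime n p" using m p by (simp add: coprime_iff_gcd_eq_1 gcd.commute algebra_simps)
    thus ?thesis using m p assms by (intro exI[of _ p]) auto
  next
    case False
    have m5: "m \<ge> 5" using m assms False by presburger
    define p where "p = m - 2"
    have p: "m = p + 2" using m5 by (simp add: p_def)
    have podd: "odd p" using False p by simp
    have "gcd p (2 * p + 4) = gcd p 4" using gcd_add_mult[of p 2 4] by simp
    also have "\<dots> = 1"
    proof -
      have "coprime p 2" using podd by simp
      hence "coprime p (2^2)" using coprime_power_right_iff[of p 2 2] by blast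
      thus ?thesis by (simp add: coprime_iff_gcd_eq_1)
    qed
    finally have g: "gcd p (2 * p + 4) = 1" .
    have nn: "n = 2 * p + 4" using m p by simp
    have "gcd n p = 1" unfolding nn using g by (metis gcd.commute)
    hence "coprime n p" by (simp add: coprime_iff_gcd_eq_1)
    thus ?thesis using m p assms m5 by (intro exI[of _ p]) auto
  qed
qed

lemma origin_chord:
  assumes nu: "(\<Sum>l<D. (u l)^2) = 1" and nv: "(\<Sum>l<D. (v l)^2) = 1" and d: "(\<Sum>l<D. (u l - v l)^2) = 1"
  shows "\<not> on_segment (\<lambda>l. 0) u v"
proof
  assume "on_segment (\<lambda>l. 0) u v"
  then obtain t where w: "(\<lambda>l::nat. 0::real) = (\<lambda>i. (1 - t) * u i + t * v i)" unfolding on_segment_def by blast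
  define S where "S = (\<Sum>l<D. u l * v l)"
  have "(\<Sum>l<D. ((1 - t) * u l + t * v l)^2) = (\<Sum>l<D. (1-t)^2 * (u l)^2 + t^2 * (v l)^2 + (2*t*(1-t)) * (u l * v l))"
    by (rule sum.cong) (auto simp: power2_eq_square algebra_simps)
  also have "\<dots> = (1-t)^2 + t^2 + 2*t*(1-t)*S"
    by (simp add: sum.distrib sum_distrib_left[symmetric] nu nv S_def)
  finally have e1: "(\<Sum>l<D. ((1 - t) * u l + t * v l)^2) = (1-t)^2 + t^2 + 2*t*(1-t)*S" .
  have "(\<Sum>l<D. ((1 - t) * u l + t * v l)^2) = 0"
    using fun_cong[OF w] by (metis (no_types, lifting) power_zero_numeral sum.neutral)
  hence e0: "(1-t)^2 + t^2 + 2*t*(1-t)*S = 0" using e1 by simp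
  have "(\<Sum>l<D. (u l - v l)^2) = (\<Sum>l<D. (u l)^2 + (v l)^2 - 2 * (u l * v l))"
    by (rule sum.cong) (auto simp: power2_eq_square algebra_simps)
  also have "\<dots> = 2 - 2 * S" by (simp add: sum.distrib sum_subtractf sum_distrib_left[symmetric] nu nv S_def)
  finally have "S = 1/2" using d by simp
  hence "2*t*(1-t)*S = t*(1-t)" by simp
  hence "(1-t)^2 + t^2 + t*(1-t) = 0" using e0 by linarith
  hence "t^2 - t + 1 = 0" by (simp add: power2_eq_square algebra_simps)
  moreover have "(t - 1/2)^2 = t^2 - t + 1/4" by (simp add: power2_eq_square algebra_simps)
  moreover have "(t - 1/2)^2 \<ge> 0" by simp
  ultimately show False by linarith
qed

lemma radial_nondeg:
  assumes nw: "(\<Sum>l<D. (w l)^2) = 1" and nu: "(\<Sum>l<D. (u l)^2) = 1" and wu: "w \<noteq> u"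
  shows "\<not> on_segment w u (\<lambda>l. 0)"
proof
  assume "on_segment w u (\<lambda>l. 0)"
  then obtain t where t: "0 \<le> t" "t \<le> 1" and e: "w = (\<lambda>i. (1 - t) * u i + t * 0)" unfolding on_segment_def by blast
  have "(\<Sum>l<D. (w l)^2) = (\<Sum>l<D. (1-t)^2 * (u l)^2)" unfolding e by (simp add: power_mult_distrib)
  also have "\<dots> = (1-t)^2" by (simp add: sum_distrib_left[symmetric] nu)
  finally have "(1-t)^2 = 1" using nw by simp
  hence "t = 0 \<or> t = 2" by (simp add: power2_eq_square algebra_simps)
  hence "t = 0" using t by auto
  hence "w = u" using e by simp
  thus False using wu by simp
qed

lemma W61_R2: "unit_dist_embedding (wheel 6 1) 2 (emb (cp 6 1) (\<lambda>j l. 0))"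
proof -
  have r: "rp 6 1 = 1" by (rule rp61)
  have r1: "rp 6 1 \<noteq> 0" using r by simp
  have cs: "\<And>i. (\<Sum>l<2. (cp 6 1 i l)^2) = 1" using cp_sum[of 2 6 1] r by simp
  have ce: "\<And>i. edist 2 (cp 6 1 i) (cp 6 1 (Suc i mod 6)) = 1" by (rule cp_edge) simp_all
  have ce2: "\<And>i. (\<Sum>l<2. (cp 6 1 i l - cp 6 1 (Suc i mod 6) l)^2) = 1"
    using ce unfolding edist_def by simp
  have inj: "\<And>i i'. i < 6 \<Longrightarrow> i' < 6 \<Longrightarrow> cp 6 1 i = cp 6 1 i' \<Longrightarrow> i = i'"
    by (rule cp_inj[OF _ _ r1]) simp_all
  have nz: "\<And>i. cp 6 1 i \<noteq> (\<lambda>l. 0)" using cp_nz[of 6 1] r by (metis (full_types) one_neq_zero)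
  show ?thesis
  proof (rule GC)
    show "(3::nat) \<le> 6" by simp
    show "\<And>i. i < 6 \<Longrightarrow> in_Rn 2 (cp 6 1 i)" by (rule cp_in)
    show "\<And>j. j < 1 \<Longrightarrow> in_Rn 2 (\<lambda>l. 0)" by (simp add: in_Rn_def)
    show "\<And>i i'. i < 6 \<Longrightarrow> i' < 6 \<Longrightarrow> cp 6 1 i = cp 6 1 i' \<Longrightarrow> i = i'" by (rule inj)
    show "\<And>j j'::nat. j < 1 \<Longrightarrow> j' < 1 \<Longrightarrow> (\<lambda>l::nat. 0::real) = (\<lambda>l. 0) \<Longrightarrow> j = j'" by simp
    show "\<And>i j. i < 6 \<Longrightarrow> j < 1 \<Longrightarrow> cp 6 1 i \<noteq> (\<lambda>l. 0)" by (rule nz)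
    show "\<And>i. i < 6 \<Longrightarrow> edist 2 (cp 6 1 i) (cp 6 1 (Suc i mod 6)) = 1" by (rule ce)
    show "\<And>i j. i < 6 \<Longrightarrow> j < 1 \<Longrightarrow> edist 2 (cp 6 1 i) (\<lambda>l. 0) = 1"
      using cs by (simp add: edist_def)
    show "\<And>u w. u < 6 \<Longrightarrow> w < 6 \<Longrightarrow> w \<noteq> u \<Longrightarrow> w \<noteq> Suc u mod 6 \<Longrightarrow>
            \<not> on_segment (cp 6 1 w) (cp 6 1 u) (cp 6 1 (Suc u mod 6))"
    proof -
      fix u w :: nat assume h: "u < 6" "w < 6" "w \<noteq> u" "w \<noteq> Suc u mod 6"
      have us: "u \<noteq> Suc u mod 6" using h(1) by (auto simp: mod_Suc)
      have s6: "Suc u mod 6 < 6" by simp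
      show "\<not> on_segment (cp 6 1 w) (cp 6 1 u) (cp 6 1 (Suc u mod 6))"
        by (rule sphere_nondeg[OF cp_in cp_in cs cs cs]) (use inj h us s6 in blast)+
    qed
    show "\<And>u j. u < 6 \<Longrightarrow> j < 1 \<Longrightarrow> \<not> on_segment (\<lambda>l. 0) (cp 6 1 u) (cp 6 1 (Suc u mod 6))"
      by (rule origin_chord[OF cs cs ce2])
    show "\<And>i j w. i < 6 \<Longrightarrow> j < 1 \<Longrightarrow> w < 6 \<Longrightarrow> w \<noteq> i \<Longrightarrow> \<not> on_segment (cp 6 1 w) (cp 6 1 i) (\<lambda>l. 0)"
      by (rule radial_nondeg[OF cs cs]) (use inj in blast)
    show "\<And>i j l::nat. i < 6 \<Longrightarrow> j < 1 \<Longrightarrow> l < 1 \<Longrightarrow> l \<noteq> j \<Longrightarrow> \<not> on_segment (\<lambda>l. 0) (cp 6 1 i) (\<lambda>l. 0)"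
      by simp
  qed
qed

lemma n_setup: assumes "n \<ge> 3" "n \<noteq> 6"
  obtains s where "0 < s" "2 * s \<le> n" "coprime n s" "rp n s > 0" "rp n s < 1"
  using exists_s[OF assms] rp_pos rp_lt1 by blast

lemma Wn2_R3: assumes n: "n \<ge> 3" "n \<noteq> 6" and k: "k \<le> 2"
  shows "\<exists>f. unit_dist_embedding (wheel n k) 3 f"
proof -
  obtain s where s: "0 < s" "2 * s \<le> n" "coprime n s" "rp n s > 0" "rp n s < 1" using n_setup[OF n] .
  define \<rho> where "\<rho> = sqrt (1 - (rp n s)^2)"
  have rr: "(rp n s)^2 < 1" using s by (simp add: power_less_one_iff abs_less_iff)
  have \<rho>0: "\<rho> \<noteq> 0" using rr by (simp add: \<rho>_def)
  have \<rho>2: "\<rho>^2 = 1 - (rp n s)^2" using rr by (simp add: \<rho>_def)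
  have f1: "\<And>i. i < n \<Longrightarrow> in_Rn 2 (cp n s i)" by (rule cp_in)
  have f2: "\<And>j. j < k \<Longrightarrow> in_Rn 3 (qA \<rho> 2 j)" by (rule in_Rn_mono[OF qA_in]) simp
  have f3: "\<And>j l. j < k \<Longrightarrow> l < 2 \<Longrightarrow> qA \<rho> 2 j l = 0" by (rule qA_low)
  have f4: "\<And>i. i < n \<Longrightarrow> (\<Sum>l<3. (cp n s i l)\<^sup>2) = (rp n s)^2" by (rule cp_sum) simp
  have f5: "\<And>j. j < k \<Longrightarrow> (\<Sum>l<3. (qA \<rho> 2 j l)\<^sup>2) = 1 - (rp n s)^2" using qA_sum[of 2 3 \<rho>] \<rho>2 by simp
  have f6: "\<And>i. i < n \<Longrightarrow> \<exists>l. cp n s i l \<noteq> 0" by (rule cp_nz) (use s in simp)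
  have f7: "\<And>j. j < k \<Longrightarrow> \<exists>l. qA \<rho> 2 j l \<noteq> 0" by (rule qA_nz[OF \<rho>0])
  have f8: "\<And>i i'. i < n \<Longrightarrow> i' < n \<Longrightarrow> cp n s i = cp n s i' \<Longrightarrow> i = i'"
    by (rule cp_inj) (use s n in simp_all)
  have f9: "\<And>j j'. j < k \<Longrightarrow> j' < k \<Longrightarrow> qA \<rho> 2 j = qA \<rho> 2 j' \<Longrightarrow> j = j'"
    using qA_inj[OF \<rho>0] k by (meson less_le_trans)
  have f10: "\<And>i. i < n \<Longrightarrow> edist 3 (cp n s i) (cp n s (Suc i mod n)) = 1" by (rule cp_edge) (use s in simp_all)
  have "unit_dist_embedding (wheel n k) 3 (emb (cp n s) (qA \<rho> 2))"
    by (rule DS[where c="cp n s" and q="qA \<rho> 2" and n=n and k=k and D=3 and a=2 and R="(rp n s)^2", OF _ _ f1 f2 f3 f4 f5 f6 f7 f8 f9 f10]) (use n in simp_all)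
  thus ?thesis by blast
qed

lemma Wnk_R4: assumes n: "n \<ge> 3" "n \<noteq> 6"
  shows "\<exists>f. unit_dist_embedding (wheel n k) 4 f"
proof -
  obtain s where s: "0 < s" "2 * s \<le> n" "coprime n s" "rp n s > 0" "rp n s < 1" using n_setup[OF n] .
  define \<rho> where "\<rho> = sqrt (1 - (rp n s)^2)"
  have rr: "(rp n s)^2 < 1" using s by (simp add: power_less_one_iff abs_less_iff)
  have \<rho>0: "\<rho> \<noteq> 0" using rr by (simp add: \<rho>_def)
  have \<rho>2: "\<rho>^2 = 1 - (rp n s)^2" using rr by (simp add: \<rho>_def)
  have f1: "\<And>i. i < n \<Longrightarrow> in_Rn 2 (cp n s i)" by (rule cp_in)
  have f2: "\<And>j. j < k \<Longrightarrow> in_Rn 4 (qB \<rho> 2 j)" by (rule in_Rn_mono[OF qB_in]) simp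
  have f3: "\<And>j l. j < k \<Longrightarrow> l < 2 \<Longrightarrow> qB \<rho> 2 j l = 0" by (rule qB_low)
  have f4: "\<And>i. i < n \<Longrightarrow> (\<Sum>l<4. (cp n s i l)\<^sup>2) = (rp n s)^2" by (rule cp_sum) simp
  have f5: "\<And>j. j < k \<Longrightarrow> (\<Sum>l<4. (qB \<rho> 2 j l)\<^sup>2) = 1 - (rp n s)^2" using qB_sum[of 2 4 \<rho>] \<rho>2 by simp
  have f6: "\<And>i. i < n \<Longrightarrow> \<exists>l. cp n s i l \<noteq> 0" by (rule cp_nz) (use s in simp)
  have f7: "\<And>j. j < k \<Longrightarrow> \<exists>l. qB \<rho> 2 j l \<noteq> 0" by (rule qB_nz[OF \<rho>0])
  have f8: "\<And>i i'. i < n \<Longrightarrow> i' < n \<Longrightarrow> cp n s i = cp n s i' \<Longrightarrow> i = i'"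
    by (rule cp_inj) (use s n in simp_all)
  have f9: "\<And>j j'. j < k \<Longrightarrow> j' < k \<Longrightarrow> qB \<rho> 2 j = qB \<rho> 2 j' \<Longrightarrow> j = j'"
    using qB_inj[OF \<rho>0] by blast
  have f10: "\<And>i. i < n \<Longrightarrow> edist 4 (cp n s i) (cp n s (Suc i mod n)) = 1" by (rule cp_edge) (use s in simp_all)
  have "unit_dist_embedding (wheel n k) 4 (emb (cp n s) (qB \<rho> 2))"
    by (rule DS[where c="cp n s" and q="qB \<rho> 2" and n=n and k=k and D=4 and a=2 and R="(rp n s)^2", OF _ _ f1 f2 f3 f4 f5 f6 f7 f8 f9 f10]) (use n in simp_all)
  thus ?thesis by blast
qed

theorem mainTheorem7:
  shows "graph_dim (wheel 6 1) = 2 \<and> (\<forall>n\<ge>3. n \<noteq> 6 \<longrightarrow> graph_dim (wheel n 1) = 3) \<and>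
         graph_dim (wheel 6 2) = 4 \<and> (\<forall>n\<ge>3. n \<noteq> 6 \<longrightarrow> graph_dim (wheel n 2) = 3) \<and>
         (\<forall>k\<ge>3. graph_dim (wheel 6 k) = 5 \<and> (\<forall>n\<ge>3. n \<noteq> 6 \<longrightarrow> graph_dim (wheel n k) = 4))"
proof (intro conjI allI impI)
  show "graph_dim (wheel 6 1) = 2"
    by (rule graph_dim_eqI[OF W61_R2]) (use no_R1[of 6 1] in simp_all)
  show "graph_dim (wheel 6 2) = 4"
    by (rule graph_dim_eqI[OF W62_R4]) (use no_R3_62 in simp_all)
next
  fix n :: nat assume n: "n \<ge> 3" "n \<noteq> 6"
  obtain f where f: "unit_dist_embedding (wheel n 1) 3 f" using Wn2_R3[OF n, of 1] by auto
  show "graph_dim (wheel n 1) = 3"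
    by (rule graph_dim_eqI[OF f]) (use no_R2[OF n, of 1] in simp_all)
next
  fix n :: nat assume n: "n \<ge> 3" "n \<noteq> 6"
  obtain f where f: "unit_dist_embedding (wheel n 2) 3 f" using Wn2_R3[OF n, of 2] by auto
  show "graph_dim (wheel n 2) = 3"
    by (rule graph_dim_eqI[OF f]) (use no_R2[OF n, of 2] in simp_all)
next
  fix k :: nat assume k: "k \<ge> 3"
  show "graph_dim (wheel 6 k) = 5"
    by (rule graph_dim_eqI[OF W6k_R5]) (use no_R4_6k[OF k] in simp_all)
  fix n :: nat assume n: "n \<ge> 3" "n \<noteq> 6"
  obtain f where f: "unit_dist_embedding (wheel n k) 4 f" using Wnk_R4[OF n, of k] by auto
  show "graph_dim (wheel n k) = 4"
    by (rule graph_dim_eqI[OF f]) (use no_R3_k3[OF n(1) k] in simp_all)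
qed

end
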